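(* Let $T>0$, $0<\eta<T$, $0<\alpha<\frac{1}{\eta}$, let $f\in C([0,\infty),[0,\infty))$, and let $a\in C([0,T],[0,\infty))$ with $a(t_0)>0$ for some $t_0\in[0,T]$. Consider the boundary value problem \[ u''(t)+a(t)f(u(t))=0,\quad 0<t<T,\qquad u'(0)=0,\quad u(T)=\alpha\int_0^{\eta}u(s)\,ds. \tag{P} \] Suppose that either (i) $f_0=0$ and $f_\infty=\infty$, or (ii) $f_0=\infty$ and $f_\infty=0$. Then (P) has at least one positive solution.
   Context: $f_0=\lim_{u\to0^+}\frac{f(u)}{u}$ and $f_\infty=\lim_{u\to\infty}\frac{f(u)}{u}$ (these limits are assumed to exist in $[0,\infty]$ with the stated values). A positive solution of (P) is a function $u\in C^2([0,T])$ satisfying (P) with $u(t)\ge0$ on $[0,T]$ and $u$ not identically zero. *)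

theory Defs
  imports "HOL-Analysis.Analysis"
begin

definition C2_on :: "real \<Rightarrow> (real \<Rightarrow> real) \<Rightarrow> (real \<Rightarrow> real) \<Rightarrow> (real \<Rightarrow> real) \<Rightarrow> bool" where
  "C2_on T u u' u'' \<longleftrightarrow>
     (\<forall>t\<in>{0..T}. (u has_real_derivative u' t) (at t within {0..T})) \<and>
     (\<forall>t\<in>{0..T}. (u' has_real_derivative u'' t) (at t within {0..T})) \<and>
     continuous_on {0..T} u''"

definition positive_solution ::
  "real \<Rightarrow> real \<Rightarrow> real \<Rightarrow> (real \<Rightarrow> real) \<Rightarrow> (real \<Rightarrow> real) \<Rightarrow> (real \<Rightarrow> real) \<Rightarrow> bool" where
  "positive_solution T \<eta> \<alpha> a f u \<longleftrightarrow>
     (\<exists>u' u''. C2_on T u u' u'' \<and>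
        (\<forall>t\<in>{0<..<T}. u'' t + a t * f (u t) = 0) \<and>
        u' 0 = 0 \<and>
        u T = \<alpha> * integral {0..\<eta>} u \<and>
        (\<forall>t\<in>{0..T}. u t \<ge> 0) \<and>
        (\<exists>t\<in>{0..T}. u t \<noteq> 0))"

end

theory Submission
  imports Defs "HOL-Library.Diagonal_Subsequence"
begin


definition Phi :: "(real \<Rightarrow> real) \<Rightarrow> real \<Rightarrow> real" where
  "Phi k t = integral {0..t} (\<lambda>s. (t - s) * k s)"

definition kint :: "real \<Rightarrow> (real \<Rightarrow> real) \<Rightarrow> bool" where
  "kint T k \<longleftrightarrow> k integrable_on {0..T} \<and> (\<lambda>s. s * k s) integrable_on {0..T}"

lemma kint_sub:
  assumes "kint T k" "0 \<le> x" "y \<le> T"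
  shows "k integrable_on {x..y}" "(\<lambda>s. s * k s) integrable_on {x..y}"
    "(\<lambda>s. (t - s) * k s) integrable_on {x..y}"
proof -
  have s: "{x..y} \<subseteq> {0..T}" using assms by auto
  show 1: "k integrable_on {x..y}" using assms s integrable_on_subinterval unfolding kint_def by blast
  show 2: "(\<lambda>s. s * k s) integrable_on {x..y}" using assms s integrable_on_subinterval unfolding kint_def by blast
  have "(\<lambda>s. t * k s - s * k s) integrable_on {x..y}"
    using 1 2 by (intro integrable_diff integrable_on_mult_right) auto
  then show "(\<lambda>s. (t - s) * k s) integrable_on {x..y}" by (simp add: algebra_simps)
qed

lemma Phi_alt:
  assumes "kint T k" "0 \<le> t" "t \<le> T"
  shows "Phi k t = t * integral {0..t} k - integral {0..t} (\<lambda>s. s * k s)"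
proof -
  have "Phi k t = integral {0..t} (\<lambda>s. t * k s - s * k s)"
    unfolding Phi_def by (simp add: algebra_simps)
  also have "\<dots> = t * integral {0..t} k - integral {0..t} (\<lambda>s. s * k s)"
    using kint_sub[OF assms(1) order_refl assms(3)]
    by (simp add: integral_diff integrable_on_mult_right)
  finally show ?thesis .
qed

lemma Phi_diff:
  assumes "kint T k" "0 \<le> t" "t \<le> t'" "t' \<le> T"
  shows "Phi k t' - Phi k t = (t' - t) * integral {0..t} k + integral {t..t'} (\<lambda>s. (t' - s) * k s)"
proof -
  have i1: "integral {0..t'} k = integral {0..t} k + integral {t..t'} k"
    using Henstock_Kurzweil_Integration.integral_combine[where a=0 and c=t and b=t' and f=k] kint_sub[OF assms(1) order_refl assms(4)] assms by auto
  have i2: "integral {0..t'} (\<lambda>s. s * k s) = integral {0..t} (\<lambda>s. s * k s) + integral {t..t'} (\<lambda>s. s * k s)"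
    using Henstock_Kurzweil_Integration.integral_combine[where a=0 and c=t and b=t' and f="\<lambda>s. s * k s"] kint_sub[OF assms(1) order_refl assms(4)] assms by auto
  have i3: "integral {t..t'} (\<lambda>s. (t' - s) * k s) = t' * integral {t..t'} k - integral {t..t'} (\<lambda>s. s * k s)"
  proof -
    have "integral {t..t'} (\<lambda>s. (t' - s) * k s) = integral {t..t'} (\<lambda>s. t' * k s - s * k s)"
      by (simp add: algebra_simps)
    also have "\<dots> = t' * integral {t..t'} k - integral {t..t'} (\<lambda>s. s * k s)"
      using kint_sub[OF assms(1), where x=t and y=t'] assms
      by (simp add: integral_diff integrable_on_mult_right)
    finally show ?thesis .
  qed
  show ?thesis
    using Phi_alt[OF assms(1), of t] Phi_alt[OF assms(1), of t'] assms i1 i2 i3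
    by (simp add: algebra_simps)
qed

lemma Phi_nonneg:
  assumes "kint T k" "\<forall>s\<in>{0..T}. 0 \<le> k s" "0 \<le> t" "t \<le> T"
  shows "0 \<le> Phi k t"
  unfolding Phi_def
  using assms kint_sub[OF assms(1) order_refl assms(4)]
  by (intro integral_nonneg) auto

lemma Phi_0: "Phi k 0 = 0"
  unfolding Phi_def by simp

lemma Phi_lip:
  assumes "kint T k" "\<forall>s\<in>{0..T}. 0 \<le> k s \<and> k s \<le> M" "0 \<le> t" "t \<le> t'" "t' \<le> T"
  shows "0 \<le> Phi k t' - Phi k t \<and> Phi k t' - Phi k t \<le> 2 * T * M * (t' - t)"
proof -
  have M0: "0 \<le> M" using assms(2) \<open>0 \<le> t\<close> \<open>t \<le> t'\<close> \<open>t' \<le> T\<close> by force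
  have a1: "0 \<le> integral {0..t} k" using assms kint_sub[OF assms(1), where x=0 and y=t]
    by (intro integral_nonneg) auto
  have a2: "integral {0..t} k \<le> integral {0..t} (\<lambda>s. M)" using assms kint_sub[OF assms(1), where x=0 and y=t]
    by (intro integral_le) auto
  have "t * M \<le> T * M" using assms M0 by (intro mult_right_mono) auto
  then have a2': "integral {0..t} k \<le> T * M" using a2 assms M0 by simp
  have b1: "0 \<le> integral {t..t'} (\<lambda>s. (t' - s) * k s)" using assms kint_sub[OF assms(1), where x=t and y=t']
    by (intro integral_nonneg) auto
  have b2: "integral {t..t'} (\<lambda>s. (t' - s) * k s) \<le> integral {t..t'} (\<lambda>s. T * M)"
    using assms kint_sub[OF assms(1), where x=t and y=t'] M0
    by (intro integral_le) (auto intro!: mult_mono)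
  have b2': "integral {t..t'} (\<lambda>s. (t' - s) * k s) \<le> T * M * (t' - t)" using b2 assms by (simp add: algebra_simps)
  have c2: "(t' - t) * integral {0..t} k \<le> (t' - t) * (T * M)"
    using a2' assms by (intro mult_left_mono) auto
  have c1: "0 \<le> (t' - t) * integral {0..t} k" using a1 assms by simp
  have c3: "(t' - t) * (T * M) + T * M * (t' - t) = 2 * T * M * (t' - t)" by (simp add: algebra_simps)
  show ?thesis
    using Phi_diff[OF assms(1) assms(3-5)] c1 c2 c3 b1 b2' by linarith
qed

lemma Phi_chord:
  assumes "kint T k" "\<forall>s\<in>{0..T}. 0 \<le> k s" "0 \<le> t" "t \<le> T"
  shows "T * Phi k t \<le> t * Phi k T"
proof -
  have i1: "(\<lambda>s. (t - s) * k s) integrable_on {0..t}" "(\<lambda>s. (T - s) * k s) integrable_on {0..t}"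
    "(\<lambda>s. (T - s) * k s) integrable_on {0..T}"
    using kint_sub[OF assms(1)] assms by auto
  have "T * Phi k t = integral {0..t} (\<lambda>s. T * ((t - s) * k s))"
    unfolding Phi_def using i1 by simp
  also have "\<dots> \<le> integral {0..t} (\<lambda>s. t * ((T - s) * k s))"
  proof (rule integral_le)
    show "(\<lambda>s. T * ((t - s) * k s)) integrable_on {0..t}" using i1 by (intro integrable_on_mult_right)
    show "(\<lambda>s. t * ((T - s) * k s)) integrable_on {0..t}" using i1 by (intro integrable_on_mult_right)
    fix s assume s: "s \<in> {0..t}"
    then have "s * t \<le> s * T" using assms by (intro mult_left_mono) auto
    then have "T * (t - s) \<le> t * (T - s)" by (simp add: algebra_simps)
    then have "T * (t - s) * k s \<le> t * (T - s) * k s" using assms s by (intro mult_right_mono) auto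
    then show "T * ((t - s) * k s) \<le> t * ((T - s) * k s)" by (simp add: algebra_simps)
  qed
  also have "\<dots> = t * integral {0..t} (\<lambda>s. (T - s) * k s)" using i1 by simp
  also have "\<dots> \<le> t * integral {0..T} (\<lambda>s. (T - s) * k s)"
    using assms i1 by (intro mult_left_mono integral_subset_le) auto
  also have "\<dots> = t * Phi k T" unfolding Phi_def by simp
  finally show ?thesis .
qed


lemma Phi_cont:
  assumes "kint T k" "\<forall>s\<in>{0..T}. 0 \<le> k s \<and> k s \<le> M"
  shows "continuous_on {0..T} (Phi k)"
proof -
  have lip: "\<bar>Phi k x - Phi k y\<bar> \<le> 2 * T * M * \<bar>x - y\<bar>" if "x \<in> {0..T}" "y \<in> {0..T}" for x y
  proof (cases "x \<le> y")
    case True then show ?thesis using Phi_lip[OF assms, of x y] that by auto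
  next
    case False then show ?thesis using Phi_lip[OF assms, of y x] that by auto
  qed
  show ?thesis unfolding continuous_on_iff
  proof (intro ballI allI impI)
    fix x e assume x: "x \<in> {0..T}" and e: "(0::real) < e"
    define d where "d = e / (2 * T * M + 1)"
    have M0: "0 \<le> M" using assms x by force
    have T0: "0 \<le> T" using x by auto
    have pos: "0 < 2 * T * M + 1" using M0 T0 by (simp add: add_nonneg_pos)
    have "d > 0" unfolding d_def using e pos by simp
    moreover have "dist (Phi k y) (Phi k x) < e" if "y \<in> {0..T}" "dist y x < d" for y
    proof -
      have "\<bar>Phi k y - Phi k x\<bar> \<le> 2 * T * M * \<bar>y - x\<bar>" using lip that x by auto
      also have "\<dots> \<le> (2 * T * M + 1) * \<bar>y - x\<bar>" by (simp add: algebra_simps)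
      also have "\<dots> < (2 * T * M + 1) * d" using that pos by (simp add: dist_real_def)
      also have "\<dots> = e" unfolding d_def using pos by simp
      finally show ?thesis by (simp add: dist_real_def)
    qed
    ultimately show "\<exists>d>0. \<forall>y\<in>{0..T}. dist y x < d \<longrightarrow> dist (Phi k y) (Phi k x) < e" by blast
  qed
qed

lemma Phi_lower:
  assumes "kint T k" "\<forall>s\<in>{0..T}. 0 \<le> k s" "0 \<le> t1" "t1 \<le> t2" "t2 \<le> T"
    "\<forall>s\<in>{t1..t2}. m \<le> k s"
  shows "m * (T - t2) * (t2 - t1) \<le> Phi k T"
proof -
  have i1: "(\<lambda>s. (T - s) * k s) integrable_on {t1..t2}" "(\<lambda>s. (T - s) * k s) integrable_on {0..T}"
    using kint_sub[OF assms(1)] assms by auto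
  have "m * (T - t2) * (t2 - t1) = integral {t1..t2} (\<lambda>s. m * (T - t2))" using assms by simp
  also have "\<dots> \<le> integral {t1..t2} (\<lambda>s. (T - s) * k s)"
  proof (rule integral_le)
    show "(\<lambda>s. m * (T - t2)) integrable_on {t1..t2}" by (rule integrable_continuous_real) (rule continuous_on_const)
    show "(\<lambda>s. (T - s) * k s) integrable_on {t1..t2}" by (rule i1)
    fix s assume s: "s \<in> {t1..t2}"
    then have "m * (T - t2) \<le> k s * (T - t2)" using assms by (intro mult_right_mono) auto
    also have "\<dots> \<le> k s * (T - s)" using assms s by (intro mult_left_mono) auto
    finally show "m * (T - t2) \<le> (T - s) * k s" by (simp add: algebra_simps)
  qed
  also have "\<dots> \<le> integral {0..T} (\<lambda>s. (T - s) * k s)"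
    using assms i1 by (intro integral_subset_le) auto
  finally show ?thesis unfolding Phi_def .
qed

lemma Phi_upper:
  assumes "kint T k" "\<forall>s\<in>{0..T}. k s \<le> M" "0 \<le> t" "t \<le> T" "0 \<le> M"
  shows "Phi k t \<le> T * T * M"
proof -
  have M: "0 \<le> M" using assms by simp
  have "Phi k t \<le> integral {0..t} (\<lambda>s. T * M)" unfolding Phi_def
  proof (rule integral_le)
    show "(\<lambda>s. (t - s) * k s) integrable_on {0..t}" using kint_sub[OF assms(1)] assms by auto
    fix s assume s: "s \<in> {0..t}"
    show "(t - s) * k s \<le> T * M"
    proof (cases "k s \<ge> 0")
      case True
      then show ?thesis using s assms by (intro mult_mono) auto
    next
      case False
      then have "(t - s) * k s \<le> 0" using s by (simp add: mult_nonneg_nonpos)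
      also have "0 \<le> T * M" using M s assms by auto
      finally show ?thesis .
    qed
  qed auto
  also have "\<dots> = t * (T * M)" using assms by simp
  also have "\<dots> \<le> T * (T * M)" using M assms by (intro mult_right_mono) auto
  also have "\<dots> = T * T * M" by simp
  finally show ?thesis .
qed

lemma Phi_close:
  assumes "kint T k1" "kint T k2" "\<forall>s\<in>{0..T}. \<bar>k1 s - k2 s\<bar> \<le> e" "0 \<le> t" "t \<le> T"
  shows "\<bar>Phi k1 t - Phi k2 t\<bar> \<le> T * T * e"
proof -
  have i: "(\<lambda>s. (t - s) * k1 s) integrable_on {0..t}" "(\<lambda>s. (t - s) * k2 s) integrable_on {0..t}"
    using kint_sub[OF assms(1)] kint_sub[OF assms(2)] assms by auto
  have e0: "0 \<le> e" using assms by force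
  have "Phi k1 t - Phi k2 t = integral {0..t} (\<lambda>s. (t - s) * k1 s - (t - s) * k2 s)"
    unfolding Phi_def using i by (simp add: integral_diff)
  also have "norm \<dots> \<le> integral {0..t} (\<lambda>s. T * e)"
  proof (rule integral_norm_bound_integral)
    show "(\<lambda>s. T * e) integrable_on {0..t}" by (rule integrable_continuous_real) (rule continuous_on_const)
    show "(\<lambda>s. (t - s) * k1 s - (t - s) * k2 s) integrable_on {0..t}" using i by (rule integrable_diff)
    fix s assume s: "s \<in> {0..t}"
    have "\<bar>(t - s) * k1 s - (t - s) * k2 s\<bar> = (t - s) * \<bar>k1 s - k2 s\<bar>"
      using s by (simp add: abs_mult flip: right_diff_distrib)
    also have "\<dots> \<le> T * e" using s assms e0 by (intro mult_mono) auto
    finally show "norm ((t - s) * k1 s - (t - s) * k2 s) \<le> T * e" by simp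
  qed
  also have "\<dots> = t * (T * e)" using assms by simp
  also have "\<dots> \<le> T * (T * e)" using e0 assms by (intro mult_right_mono) auto
  also have "\<dots> = T * T * e" by simp
  finally show ?thesis by simp
qed




lemma Phi_sum:
  assumes "finite J" "\<And>j. j \<in> J \<Longrightarrow> kint T (k j)" "0 \<le> t" "t \<le> T"
  shows "Phi (\<lambda>s. \<Sum>j\<in>J. x j * k j s) t = (\<Sum>j\<in>J. x j * Phi (k j) t)"
proof -
  have "Phi (\<lambda>s. \<Sum>j\<in>J. x j * k j s) t = integral {0..t} (\<lambda>s. \<Sum>j\<in>J. x j * ((t - s) * k j s))"
    unfolding Phi_def by (simp add: sum_distrib_left algebra_simps)
  also have "\<dots> = (\<Sum>j\<in>J. integral {0..t} (\<lambda>s. x j * ((t - s) * k j s)))"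
    using assms by (intro integral_sum integrable_on_mult_right kint_sub(3)[where T=T]) auto
  also have "\<dots> = (\<Sum>j\<in>J. x j * Phi (k j) t)"
    unfolding Phi_def by simp
  finally show ?thesis .
qed

lemma kint_sum:
  assumes "finite J" "\<And>j. j \<in> J \<Longrightarrow> kint T (k j)"
  shows "kint T (\<lambda>s. \<Sum>j\<in>J. x j * k j s)"
proof -
  have e: "(\<lambda>s. s * (\<Sum>j\<in>J. x j * k j s)) = (\<lambda>s. \<Sum>j\<in>J. x j * (s * k j s))"
    by (simp add: sum_distrib_left mult.left_commute)
  show ?thesis
    using assms unfolding kint_def e
    by (auto intro!: integrable_sum integrable_on_mult_right)
qed

lemma cell_int:
  fixes f :: "real \<Rightarrow> real"
  assumes "continuous_on {0..T} f" 
  shows "(\<lambda>s. f s * indicator {l..<r} s) integrable_on {0..T}"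
proof (rule integrable_spike)
  have "f integrable_on {max l 0..min r T}"
    by (rule integrable_continuous_real, rule continuous_on_subset[OF assms]) auto
  then have "f integrable_on ({l..r} \<inter> {0..T})" by (simp add: Int_atLeastAtMost)
  then show "(\<lambda>s. if s \<in> {l..r} then f s else 0) integrable_on {0..T}"
    by (simp only: integrable_restrict_Int)
  show "negligible {r}" by auto
  show "f x * indicator {l..<r} x = (if x \<in> {l..r} then f x else 0)" if "x \<in> {0..T} - {r}" for x
    using that by (auto simp: indicator_def)
qed

lemma kint_cell:
  assumes "continuous_on {0..T} a"
  shows "kint T (\<lambda>s. a s * indicator {l..<r} s)"
  unfolding kint_def
proof
  show "(\<lambda>s. a s * indicator {l..<r} s) integrable_on {0..T}" by (rule cell_int[OF assms])
  have "continuous_on {0..T} (\<lambda>s. s * a s)" by (intro continuous_intros assms)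
  from cell_int[OF this] show "(\<lambda>s. s * (a s * indicator {l..<r} s)) integrable_on {0..T}"
    by (simp add: mult.assoc)
qed

definition cellI :: "real \<Rightarrow> nat \<Rightarrow> real set" where
  "cellI h j = {real j * h ..< real (Suc j) * h}"

definition wt :: "(real \<Rightarrow> real) \<Rightarrow> real \<Rightarrow> nat \<Rightarrow> real \<Rightarrow> real" where
  "wt a h j t = Phi (\<lambda>s. a s * indicator (cellI h j) s) t"

primrec Us :: "(real \<Rightarrow> real) \<Rightarrow> (real \<Rightarrow> real) \<Rightarrow> real \<Rightarrow> real \<Rightarrow> nat \<Rightarrow> real list" where
  "Us a g h c 0 = []"
| "Us a g h c (Suc k) = Us a g h c k @ [c - (\<Sum>j<k. g (Us a g h c k ! j) * wt a h j (real k * h))]"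

definition UU :: "(real \<Rightarrow> real) \<Rightarrow> (real \<Rightarrow> real) \<Rightarrow> real \<Rightarrow> real \<Rightarrow> nat \<Rightarrow> real" where
  "UU a g h c k = Us a g h c (Suc k) ! k"

definition sig :: "(real \<Rightarrow> real) \<Rightarrow> (real \<Rightarrow> real) \<Rightarrow> real \<Rightarrow> nat \<Rightarrow> real \<Rightarrow> real \<Rightarrow> real" where
  "sig a g h N c s = (\<Sum>j\<le>N. g (UU a g h c j) * indicator (cellI h j) s)"

definition uN :: "(real \<Rightarrow> real) \<Rightarrow> (real \<Rightarrow> real) \<Rightarrow> real \<Rightarrow> nat \<Rightarrow> real \<Rightarrow> real \<Rightarrow> real" where
  "uN a g h N c t = c - (\<Sum>j\<le>N. g (UU a g h c j) * wt a h j t)"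

lemma length_Us [simp]: "length (Us a g h c k) = k"
  by (induction k) auto

lemma Us_nth: "j < k \<Longrightarrow> Us a g h c k ! j = UU a g h c j"
proof (induction k)
  case 0 then show ?case by simp
next
  case (Suc k)
  show ?case
  proof (cases "j < k")
    case True
    then show ?thesis using Suc by (simp add: nth_append)
  next
    case False
    then have "j = k" using Suc by simp
    then show ?thesis by (simp add: UU_def)
  qed
qed

lemma UU_eq: "UU a g h c k = c - (\<Sum>j<k. g (UU a g h c j) * wt a h j (real k * h))"
  by (simp add: UU_def nth_append Us_nth)

lemma UU_cont:
  assumes "continuous_on UNIV g"
  shows "continuous_on UNIV (\<lambda>c. UU a g h c k)"
proof (induction k rule: less_induct)
  case (less k)
  have "continuous_on UNIV (\<lambda>c. c - (\<Sum>j<k. g (UU a g h c j) * wt a h j (real k * h)))"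
    using less by (intro continuous_intros continuous_on_compose2[OF assms]) auto
  then show ?case by (subst UU_eq) simp
qed

lemma cell_iff:
  assumes "h > 0" "s \<ge> 0"
  shows "s \<in> cellI h j \<longleftrightarrow> j = nat \<lfloor>s / h\<rfloor>"
proof -
  have "s \<in> cellI h j \<longleftrightarrow> real j \<le> s / h \<and> s / h < real j + 1"
    using assms by (auto simp: cellI_def field_simps)
  also have "\<dots> \<longleftrightarrow> \<lfloor>s / h\<rfloor> = int j" by (simp add: floor_eq_iff)
  also have "\<dots> \<longleftrightarrow> j = nat \<lfloor>s / h\<rfloor>" using assms by auto
  finally show ?thesis .
qed

context
  fixes T A :: real and a g :: "real \<Rightarrow> real" and N :: nat and h :: real
  assumes Tpos: "T > 0" and Npos: "N > 0" and hdef: "h = T / real N"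
    and acont: "continuous_on {0..T} a" and abnd: "\<forall>t\<in>{0..T}. 0 \<le> a t \<and> a t \<le> A"
begin

lemma hpos: "h > 0" using Tpos Npos hdef by simp

lemma wt_zero:
  assumes "0 \<le> t" "t \<le> real j * h"
  shows "wt a h j t = 0"
proof -
  have "integral {0..t} (\<lambda>s. (t - s) * (a s * indicator (cellI h j) s)) = integral {0..t} (\<lambda>s. 0)"
  proof (rule integral_cong)
    fix s assume s: "s \<in> {0..t}"
    show "(t - s) * (a s * indicator (cellI h j) s) = 0"
    proof (cases "s = t")
      case False
      then have "s < real j * h" using s assms by auto
      then show ?thesis by (auto simp: cellI_def indicator_def)
    qed simp
  qed
  then show ?thesis unfolding wt_def Phi_def by simp
qed

lemma kint_cellI: "kint T (\<lambda>s. a s * indicator (cellI h j) s)"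
  unfolding cellI_def by (rule kint_cell[OF acont])

lemma uN_grid:
  assumes "k \<le> N"
  shows "uN a g h N c (real k * h) = UU a g h c k"
proof -
  have split: "{..N} = {..<k} \<union> {k..N}" using assms by auto
  have z: "(\<Sum>j\<in>{k..N}. g (UU a g h c j) * wt a h j (real k * h)) = 0"
    using hpos by (intro sum.neutral) (auto intro!: wt_zero mult_right_mono)
  have "(\<Sum>j\<le>N. g (UU a g h c j) * wt a h j (real k * h)) =
        (\<Sum>j<k. g (UU a g h c j) * wt a h j (real k * h)) + (\<Sum>j\<in>{k..N}. g (UU a g h c j) * wt a h j (real k * h))"
    unfolding split by (rule sum.union_disjoint) auto
  then show ?thesis using z by (simp add: uN_def UU_eq[of a g h c k])
qed

lemma kint_sig: "kint T (\<lambda>s. a s * sig a g h N c s)"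
proof -
  have "kint T (\<lambda>s. \<Sum>j\<le>N. g (UU a g h c j) * (a s * indicator (cellI h j) s))"
    by (intro kint_sum kint_cellI) auto
  moreover have "(\<lambda>s. a s * sig a g h N c s) = (\<lambda>s. \<Sum>j\<le>N. g (UU a g h c j) * (a s * indicator (cellI h j) s))"
    unfolding sig_def by (simp only: sum_distrib_left mult.left_commute)
  ultimately show ?thesis by simp
qed

lemma uN_rep:
  assumes "0 \<le> t" "t \<le> T"
  shows "uN a g h N c t = c - Phi (\<lambda>s. a s * sig a g h N c s) t"
proof -
  have "Phi (\<lambda>s. \<Sum>j\<le>N. g (UU a g h c j) * (a s * indicator (cellI h j) s)) t
      = (\<Sum>j\<le>N. g (UU a g h c j) * Phi (\<lambda>s. a s * indicator (cellI h j) s) t)"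
    using assms kint_cellI by (intro Phi_sum[where T=T]) auto
  moreover have "(\<lambda>s. a s * sig a g h N c s) = (\<lambda>s. \<Sum>j\<le>N. g (UU a g h c j) * (a s * indicator (cellI h j) s))"
    unfolding sig_def by (simp only: sum_distrib_left mult.left_commute)
  ultimately show ?thesis unfolding uN_def wt_def by simp
qed

lemma sig_eq:
  assumes "0 \<le> s" "s \<le> T"
  shows "sig a g h N c s = g (uN a g h N c (real (nat \<lfloor>s / h\<rfloor>) * h))"
    "0 \<le> real (nat \<lfloor>s / h\<rfloor>) * h" "real (nat \<lfloor>s / h\<rfloor>) * h \<le> s"
proof -
  define i where "i = nat \<lfloor>s / h\<rfloor>"
  have "s \<le> real N * h" using assms hdef Npos by simp
  then have "s / h \<le> real N" using hpos by (simp add: divide_le_eq)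
  then have iN: "i \<le> N" unfolding i_def by (simp add: nat_le_iff floor_le_iff)
  have ind: "indicator (cellI h j) s = (if j = i then 1 else 0 :: real)" for j
    using cell_iff[OF hpos assms(1)] unfolding i_def by (simp add: indicator_def)
  have "sig a g h N c s = g (UU a g h c i)"
    unfolding sig_def ind using iN by (simp add: if_distrib cong: if_cong)
  also have "\<dots> = g (uN a g h N c (real i * h))" using uN_grid[OF iN] by simp
  finally show "sig a g h N c s = g (uN a g h N c (real (nat \<lfloor>s / h\<rfloor>) * h))" unfolding i_def .
  show "0 \<le> real (nat \<lfloor>s / h\<rfloor>) * h" using hpos by simp
  have "real i \<le> s / h" unfolding i_def using assms hpos by (simp add: of_nat_nat)
  then show "real (nat \<lfloor>s / h\<rfloor>) * h \<le> s" unfolding i_def using hpos by (simp add: field_simps)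
qed

lemma wt_cont: "continuous_on {0..T} (wt a h j)"
  unfolding wt_def
  by (rule Phi_cont[OF kint_cellI, where M=A]) (use abnd in \<open>auto simp: indicator_def\<close>)

lemma B_cont:
  assumes "continuous_on UNIV g" "0 \<le> \<eta>" "\<eta> \<le> T"
  shows "continuous_on UNIV (\<lambda>c. uN a g h N c T - \<alpha> * integral {0..\<eta>} (uN a g h N c))"
proof -
  have wi: "wt a h j integrable_on {0..\<eta>}" for j
    using wt_cont continuous_on_subset assms integrable_continuous_real
    by (metis atLeastAtMost_iff atLeastatMost_subset_iff order_refl)
  have "integral {0..\<eta>} (uN a g h N c) = c * \<eta> - (\<Sum>j\<le>N. g (UU a g h c j) * integral {0..\<eta>} (wt a h j))" for c
  proof -
    have "integral {0..\<eta>} (uN a g h N c) = integral {0..\<eta>} (\<lambda>t. c) - integral {0..\<eta>} (\<lambda>t. \<Sum>j\<le>N. g (UU a g h c j) * wt a h j t)"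
      unfolding uN_def using wi
      by (intro integral_diff integrable_sum integrable_on_mult_right) (auto intro: integrable_continuous_real)
    also have "integral {0..\<eta>} (\<lambda>t. \<Sum>j\<le>N. g (UU a g h c j) * wt a h j t) = (\<Sum>j\<le>N. g (UU a g h c j) * integral {0..\<eta>} (wt a h j))"
      using wi by (subst integral_sum) (auto intro: integrable_on_mult_right)
    finally show ?thesis using assms by simp
  qed
  moreover have "continuous_on UNIV (\<lambda>c. (c - (\<Sum>j\<le>N. g (UU a g h c j) * wt a h j T)) - \<alpha> * (c * \<eta> - (\<Sum>j\<le>N. g (UU a g h c j) * integral {0..\<eta>} (wt a h j))))"
    by (intro continuous_intros continuous_on_compose2[OF assms(1) UU_cont[OF assms(1)]]) auto
  ultimately show ?thesis unfolding uN_def by simp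
qed

end



lemma integral_linear:
  fixes p q e :: real
  assumes "0 \<le> e"
  shows "integral {0..e} (\<lambda>t. p - q * t) = p * e - q * e^2 / 2"
proof -
  have "((\<lambda>t. p - q * t) has_integral ((\<lambda>t. p * t - q * t^2 / 2) e - (\<lambda>t. p * t - q * t^2 / 2) 0)) {0..e}"
  proof (rule fundamental_theorem_of_calculus)
    show "0 \<le> e" by fact
    fix x assume "x \<in> {0..e}"
    have "((\<lambda>t. p * t - q * t^2 / 2) has_real_derivative (p - q * x)) (at x within {0..e})"
      by (auto intro!: derivative_eq_intros simp: power2_eq_square)
    then show "((\<lambda>t. p * t - q * t^2 / 2) has_vector_derivative (p - q * x)) (at x within {0..e})"
      by (simp add: has_real_derivative_iff_has_vector_derivative)
  qed
  then show ?thesis by (simp add: integral_unique)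
qed

lemma f_bound:
  assumes "continuous_on {0..} f"
  shows "\<exists>Mf\<ge>0. \<forall>x\<in>{0..X}. (f::real\<Rightarrow>real) x \<le> Mf"
proof -
  have "compact (f ` {0..X})"
    by (rule compact_continuous_image) (use continuous_on_subset[OF assms] in auto)
  then obtain B where "\<forall>y\<in>f ` {0..X}. norm y \<le> B" using compact_imp_bounded bounded_iff by metis
  then show ?thesis by (intro exI[of _ "max B 0"]) force
qed

definition REP :: "real \<Rightarrow> (real \<Rightarrow> real) \<Rightarrow> (real \<Rightarrow> real) \<Rightarrow> real \<Rightarrow> (real \<Rightarrow> real) \<Rightarrow> (real \<Rightarrow> real) \<Rightarrow> bool" where
  "REP T a f c \<sigma> u \<longleftrightarrow> kint T (\<lambda>s. a s * \<sigma> s) \<and> (\<forall>t\<in>{0..T}. u t = c - Phi (\<lambda>s. a s * \<sigma> s) t)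
     \<and> (\<forall>s\<in>{0..T}. \<exists>q\<in>{0..s}. \<sigma> s = f (max (u q) 0))"

context
  fixes T \<eta> \<alpha> A :: real and a f :: "real \<Rightarrow> real"
  assumes Tpos: "T > 0" and eta: "0 < \<eta>" "\<eta> < T" and alpha: "0 < \<alpha>" "\<alpha> * \<eta> < 1"
    and abnd: "\<forall>t\<in>{0..T}. 0 \<le> a t \<and> a t \<le> A"
    and fcont: "continuous_on {0..} f" and fnn: "\<forall>x\<ge>0. f x \<ge> 0"
begin

context
  fixes c :: real and \<sigma> u :: "real \<Rightarrow> real"
  assumes rep: "REP T a f c \<sigma> u"
begin

lemma R_kint: "kint T (\<lambda>s. a s * \<sigma> s)" using rep unfolding REP_def by blast
lemma R_u: "t \<in> {0..T} \<Longrightarrow> u t = c - Phi (\<lambda>s. a s * \<sigma> s) t" using rep unfolding REP_def by blast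
lemma R_sig: "s \<in> {0..T} \<Longrightarrow> \<exists>q\<in>{0..s}. \<sigma> s = f (max (u q) 0)" using rep unfolding REP_def by blast

lemma R_sig_nn: "s \<in> {0..T} \<Longrightarrow> 0 \<le> \<sigma> s"
  using R_sig fnn by force

lemma R_k_nn: "\<forall>s\<in>{0..T}. 0 \<le> a s * \<sigma> s"
  using R_sig_nn abnd by auto

lemma R_le_c: "t \<in> {0..T} \<Longrightarrow> u t \<le> c"
  using R_u Phi_nonneg[OF R_kint R_k_nn] by force

lemma R_bound: obtains Mf where "Mf \<ge> 0" "\<forall>s\<in>{0..T}. 0 \<le> \<sigma> s \<and> \<sigma> s \<le> Mf"
proof -
  obtain Mf where Mf: "Mf \<ge> 0" "\<forall>x\<in>{0..max c 0}. f x \<le> Mf" using f_bound[OF fcont] by blast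
  have "\<sigma> s \<le> Mf" if s: "s \<in> {0..T}" for s
  proof -
    obtain q where q: "q \<in> {0..s}" "\<sigma> s = f (max (u q) 0)" using R_sig s by blast
    have "u q \<le> c" using R_le_c q s by auto
    then show ?thesis using q Mf by auto
  qed
  then show ?thesis using that Mf R_sig_nn by blast
qed

lemma R_kbound: obtains K where "\<forall>s\<in>{0..T}. 0 \<le> a s * \<sigma> s \<and> a s * \<sigma> s \<le> K"
proof -
  obtain Mf where Mf: "Mf \<ge> 0" "\<forall>s\<in>{0..T}. 0 \<le> \<sigma> s \<and> \<sigma> s \<le> Mf" using R_bound by blast
  have "a s * \<sigma> s \<le> A * Mf" if "s \<in> {0..T}" for s
    using abnd Mf that by (intro mult_mono) auto
  then show ?thesis using that R_k_nn by blast
qed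

lemma R_mono: "0 \<le> t \<Longrightarrow> t \<le> t' \<Longrightarrow> t' \<le> T \<Longrightarrow> u t' \<le> u t"
proof -
  assume h: "0 \<le> t" "t \<le> t'" "t' \<le> T"
  obtain K where K: "\<forall>s\<in>{0..T}. 0 \<le> a s * \<sigma> s \<and> a s * \<sigma> s \<le> K" using R_kbound by blast
  show ?thesis using Phi_lip[OF R_kint K h] R_u[of t] R_u[of t'] h by auto
qed

lemma R_cont: "continuous_on {0..T} u"
proof -
  obtain K where K: "\<forall>s\<in>{0..T}. 0 \<le> a s * \<sigma> s \<and> a s * \<sigma> s \<le> K" using R_kbound by blast
  have "continuous_on {0..T} (\<lambda>t. c - Phi (\<lambda>s. a s * \<sigma> s) t)"
    by (intro continuous_intros Phi_cont[OF R_kint K])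
  then show ?thesis by (rule continuous_on_eq) (use R_u in auto)
qed

lemma R_chord: "t \<in> {0..T} \<Longrightarrow> T * (c - u t) \<le> t * (c - u T)"
  using Phi_chord[OF R_kint R_k_nn, of t] R_u[of t] R_u[of T] Tpos by auto

lemma R_lin: "t \<in> {0..T} \<Longrightarrow> c - t * ((c - u T) / T) \<le> u t"
proof -
  assume t: "t \<in> {0..T}"
  have "T * (c - u t) \<le> t * (c - u T)" by (rule R_chord[OF t])
  then have "c - u t \<le> t * (c - u T) / T" using Tpos by (simp add: field_simps)
  then show ?thesis by (simp add: field_simps)
qed

lemma R_pos:
  assumes "c > 0" "u T - \<alpha> * integral {0..\<eta>} u \<ge> 0"
  shows "u T > 0"
proof -
  define d where "d = c - u T"
  have int: "integral {0..\<eta>} (\<lambda>t. c - (d / T) * t) \<le> integral {0..\<eta>} u"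
  proof (rule integral_le)
    show "(\<lambda>t. c - d / T * t) integrable_on {0..\<eta>}" by (intro integrable_continuous_real continuous_intros)
    show "u integrable_on {0..\<eta>}"
      using R_cont eta by (intro integrable_continuous_real) (auto elim: continuous_on_subset)
    fix t assume "t \<in> {0..\<eta>}"
    then show "c - d / T * t \<le> u t" using R_lin[of t] eta unfolding d_def by (auto simp: mult.commute)
  qed
  have I: "integral {0..\<eta>} (\<lambda>t. c - (d / T) * t) = c * \<eta> - (d / T) * \<eta>^2 / 2"
    using integral_linear[of \<eta> c "d / T"] eta by simp
  have "\<alpha> * (c * \<eta> - (d / T) * \<eta>^2 / 2) \<le> \<alpha> * integral {0..\<eta>} u"
    using int I alpha by (intro mult_left_mono) auto
  then have key: "\<alpha> * (c * \<eta> - (d / T) * \<eta>^2 / 2) \<le> c - d" using assms unfolding d_def by auto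
  have q: "\<eta>^2 / (2 * T) < \<eta>" using eta by (simp add: power2_eq_square field_simps)
  have q2: "\<alpha> * (\<eta>^2 / (2 * T)) < 1" using alpha q
    by (meson less_trans mult_strict_left_mono)
  have e1: "\<alpha> * (c * \<eta> - (d / T) * \<eta>^2 / 2) = \<alpha> * \<eta> * c - d * (\<alpha> * (\<eta>^2 / (2 * T)))"
    using Tpos by (simp add: field_simps)
  have "d * (1 - \<alpha> * (\<eta>^2 / (2 * T))) \<le> c * (1 - \<alpha> * \<eta>)"
    using key e1 by (simp add: algebra_simps)
  also have "\<dots> < c * (1 - \<alpha> * (\<eta>^2 / (2 * T)))"
  proof -
    have "\<alpha> * (\<eta>^2 / (2 * T)) < \<alpha> * \<eta>" using q alpha by (intro mult_strict_left_mono)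
    then show ?thesis using assms by (intro mult_strict_left_mono) auto
  qed
  finally have "d < c" using q2 by (simp add: mult_less_cancel_right)
  then show ?thesis unfolding d_def by simp
qed

lemma R_low:
  assumes c: "c > 0" and t12: "0 \<le> t1" "t1 \<le> t2" "t2 < T"
    and a0: "a0 \<ge> 0" "\<forall>s\<in>{t1..t2}. a0 \<le> a s"
    and M: "M \<ge> 0" "M * ((1 - t2 / T) * c) * a0 * (T - t2) * (t2 - t1) > c"
    and fM: "\<forall>x\<in>{(1 - t2 / T) * c..c}. M * x \<le> f x"
  shows "u T - \<alpha> * integral {0..\<eta>} u < 0"
proof (rule ccontr)
  assume "\<not> ?thesis"
  then have uT: "u T > 0" using R_pos c by simp
  have lb: "a0 * (M * ((1 - t2 / T) * c)) \<le> a s * \<sigma> s" if s: "s \<in> {t1..t2}" for s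
  proof -
    have sT: "s \<in> {0..T}" using s t12 by auto
    obtain q where q: "q \<in> {0..s}" "\<sigma> s = f (max (u q) 0)" using R_sig sT by blast
    have "u s \<le> u q" using R_mono[of q s] q sT by auto
    moreover have "c - s * ((c - u T) / T) \<le> u s" using R_lin sT by auto
    moreover have "s * ((c - u T) / T) \<le> s * (c / T)" using uT sT Tpos
      by (intro mult_left_mono) (auto simp: divide_right_mono)
    moreover have "s * (c / T) \<le> t2 * (c / T)" using s c Tpos by (intro mult_right_mono) auto
    ultimately have lo: "(1 - t2 / T) * c \<le> u q" by (simp add: algebra_simps)
    have hi: "u q \<le> c" using R_le_c q sT by auto
    have "(1 - t2 / T) * c > 0" using t12 c Tpos by (simp add: field_simps)
    then have mx: "max (u q) 0 = u q" using lo by auto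
    have "M * ((1 - t2 / T) * c) \<le> M * u q" using M lo by (intro mult_left_mono) auto
    also have "\<dots> \<le> \<sigma> s" using fM lo hi q mx by auto
    finally have "M * ((1 - t2 / T) * c) \<le> \<sigma> s" .
    moreover have "0 \<le> M * ((1 - t2 / T) * c)" using M \<open>(1 - t2 / T) * c > 0\<close> by simp
    moreover have "a0 \<le> a s" using a0 s by blast
    ultimately show ?thesis using a0 by (intro mult_mono) auto
  qed
  have "a0 * (M * ((1 - t2 / T) * c)) * (T - t2) * (t2 - t1) \<le> Phi (\<lambda>s. a s * \<sigma> s) T"
    using Phi_lower[OF R_kint R_k_nn t12(1,2)] t12 lb by auto
  then have "c < Phi (\<lambda>s. a s * \<sigma> s) T" using M(2) by (simp add: algebra_simps)
  then show False using R_u[of T] uT Tpos by auto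
qed

lemma R_up:
  assumes c: "c > 0" and e: "\<epsilon> \<ge> 0" "C \<ge> 0" and fb: "\<forall>x\<in>{0..c}. f x \<le> \<epsilon> * x + C"
    and big: "c - T * T * (A * (\<epsilon> * c + C)) - \<alpha> * \<eta> * c > 0"
  shows "u T - \<alpha> * integral {0..\<eta>} u > 0"
proof -
  have A0: "A \<ge> 0" using abnd Tpos by force
  have sb: "\<sigma> s \<le> \<epsilon> * c + C" if s: "s \<in> {0..T}" for s
  proof -
    obtain q where q: "q \<in> {0..s}" "\<sigma> s = f (max (u q) 0)" using R_sig s by blast
    have "u q \<le> c" using R_le_c q s by auto
    then have "max (u q) 0 \<in> {0..c}" using c by auto
    then have "\<sigma> s \<le> \<epsilon> * max (u q) 0 + C" using fb q by auto
    also have "\<dots> \<le> \<epsilon> * c + C" using \<open>u q \<le> c\<close> e c by (auto intro: mult_left_mono)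
    finally show ?thesis .
  qed
  have kb: "\<forall>s\<in>{0..T}. a s * \<sigma> s \<le> A * (\<epsilon> * c + C)"
  proof
    fix s assume s: "s \<in> {0..T}"
    show "a s * \<sigma> s \<le> A * (\<epsilon> * c + C)"
      using sb[OF s] abnd s R_sig_nn[OF s] A0 by (intro mult_mono) auto
  qed
  have "Phi (\<lambda>s. a s * \<sigma> s) T \<le> T * T * (A * (\<epsilon> * c + C))"
    using Phi_upper[OF R_kint kb] Tpos A0 e c by auto
  then have uT: "c - T * T * (A * (\<epsilon> * c + C)) \<le> u T" using R_u[of T] Tpos by auto
  have "integral {0..\<eta>} u \<le> integral {0..\<eta>} (\<lambda>t. c)"
  proof (rule integral_le)
    show "u integrable_on {0..\<eta>}"
      using R_cont eta by (intro integrable_continuous_real) (auto elim: continuous_on_subset)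
    show "(\<lambda>t. c) integrable_on {0..\<eta>}" by (intro integrable_continuous_real continuous_intros)
    fix t assume "t \<in> {0..\<eta>}" then show "u t \<le> c" using R_le_c eta by auto
  qed
  then have "integral {0..\<eta>} u \<le> \<eta> * c" using eta by simp
  then have "\<alpha> * integral {0..\<eta>} u \<le> \<alpha> * (\<eta> * c)" using alpha by (intro mult_left_mono) auto
  then show ?thesis using uT big by (simp add: algebra_simps)
qed

end

end



lemma AA:
  fixes F :: "nat \<Rightarrow> real \<Rightarrow> real"
  assumes T: "T > 0" and L: "L \<ge> 0"
    and bnd: "\<And>n t. t \<in> {0..T} \<Longrightarrow> \<bar>F n t\<bar> \<le> R"
    and lip: "\<And>n t t'. t \<in> {0..T} \<Longrightarrow> t' \<in> {0..T} \<Longrightarrow> \<bar>F n t - F n t'\<bar> \<le> L * \<bar>t - t'\<bar>"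
  shows "\<exists>r u. strict_mono (r :: nat \<Rightarrow> nat) \<and> (\<forall>e>0. \<exists>N. \<forall>n\<ge>N. \<forall>t\<in>{0..T}. \<bar>F (r n) t - u t\<bar> < e)"
proof -
  define P where "P i = T * min 1 (real (fst (prod_decode i)) / real (Suc (snd (prod_decode i))))" for i
  have P01: "P i \<in> {0..T}" for i
    unfolding P_def using T by (auto simp: mult_left_le)
  have Pgrid: "P (prod_encode (j, K)) = T * (real j / real (Suc K))" if "j \<le> Suc K" for j K
    unfolding P_def using that by auto
  interpret S: subseqs "\<lambda>k s. convergent (\<lambda>n. F (s n) (P k))"
  proof
    fix k and s :: "nat \<Rightarrow> nat" assume "strict_mono s"
    have "\<forall>n. F (s n) (P k) \<in> {-R..R}" 
    proof
      fix n have "\<bar>F (s n) (P k)\<bar> \<le> R" by (rule bnd[OF P01])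
      then show "F (s n) (P k) \<in> {-R..R}" by (simp add: abs_le_iff)
    qed
    then obtain l r where "strict_mono (r::nat\<Rightarrow>nat)" "((\<lambda>n. F (s n) (P k)) \<circ> r) \<longlonglongrightarrow> l"
      using seq_compactE[OF compact_imp_seq_compact[OF compact_Icc]] by metis
    then show "\<exists>r'. strict_mono r' \<and> convergent (\<lambda>n. F ((s \<circ> r') n) (P k))"
      by (intro exI[of _ r]) (auto simp: convergent_def o_def)
  qed
  define r where "r = S.diagseq"
  have rmono: "strict_mono r" unfolding r_def by (rule S.subseq_diagseq)
  define G where "G n = F (r n)" for n
  have cv: "convergent (\<lambda>n. G n (P k))" for k
  proof -
    have "convergent (\<lambda>n. F ((S.diagseq \<circ> (+) (Suc k)) n) (P k))"
    proof (rule S.diagseq_holds)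
      fix r' s n assume "strict_mono (r'::nat \<Rightarrow> nat)" "convergent (\<lambda>m. F (s m) (P n))"
      from convergent_subseq_convergent[OF this(2) this(1)]
      show "convergent (\<lambda>m. F ((s \<circ> r') m) (P n))" by (simp add: o_def)
    qed
    then have "convergent (\<lambda>n. (\<lambda>m. F (S.diagseq m) (P k)) (n + Suc k))" by (simp add: o_def add.commute)
    then show ?thesis unfolding G_def r_def
      using convergent_ignore_initial_segment[where f="\<lambda>m. F (S.diagseq m) (P k)" and m="Suc k"] by simp
  qed
  have uc: "uniformly_Cauchy_on {0..T} G"
  proof (rule uniformly_Cauchy_onI)
    fix e :: real assume e: "e > 0"
    obtain K0 :: nat where K0: "3 * L * T / e < real K0" using reals_Archimedean2 by blast
    define K where "K = Suc K0"
    have Kpos: "real K > 0" unfolding K_def by simp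
    have LK: "L * (T / real K) < e / 3"
    proof -
      have "3 * L * T / e < real K" using K0 unfolding K_def by simp
      then have "3 * L * T < real K * e" using e by (simp add: divide_less_eq)
      then show ?thesis using Kpos by (simp add: field_simps)
    qed
    define p where "p j = T * (real j / real K)" for j
    have pP: "p j = P (prod_encode (j, K0))" if "j \<le> K" for j
      using Pgrid[of j K0] that unfolding p_def K_def by simp
    define l where "l j = lim (\<lambda>n. G n (p j))" for j
    have lim: "(\<lambda>n. G n (p j)) \<longlonglongrightarrow> l j" if "j \<le> K" for j
      using cv[of "prod_encode (j, K0)"] pP[OF that] unfolding l_def by (simp add: convergent_LIMSEQ_iff)
    have "\<forall>j\<in>{..K}. eventually (\<lambda>n. dist (G n (p j)) (l j) < e / 6) sequentially"
    proof
      fix j assume "j \<in> {..K}"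
      then have "(\<lambda>n. G n (p j)) \<longlonglongrightarrow> l j" using lim by simp
      moreover have "e / 6 > 0" using e by simp
      ultimately show "eventually (\<lambda>n. dist (G n (p j)) (l j) < e / 6) sequentially"
        by (rule tendstoD)
    qed
    then have "eventually (\<lambda>n. \<forall>j\<in>{..K}. dist (G n (p j)) (l j) < e / 6) sequentially"
      by (intro eventually_ball_finite) auto
    then obtain N where N: "\<And>n j. n \<ge> N \<Longrightarrow> j \<le> K \<Longrightarrow> \<bar>G n (p j) - l j\<bar> < e / 6"
      unfolding eventually_sequentially dist_real_def by auto
    show "\<exists>M. \<forall>x\<in>{0..T}. \<forall>m\<ge>M. \<forall>n\<ge>M. dist (G m x) (G n x) < e"
    proof (intro exI[of _ N] ballI allI impI)
      fix t m n assume t: "t \<in> {0..T}" and m: "m \<ge> N" and n: "n \<ge> N"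
      define j where "j = nat \<lfloor>t * real K / T\<rfloor>"
      have tK0: "0 \<le> t * real K / T" using t T by simp
      have fl1: "real j \<le> t * real K / T" unfolding j_def using tK0 by (simp add: of_nat_nat)
      have fl2: "t * real K / T < real j + 1" unfolding j_def using tK0 by (simp add: of_nat_nat)
      have "t * real K / T \<le> real K" using t T Kpos by (simp add: field_simps)
      then have jK: "j \<le> K" unfolding j_def by (simp add: nat_le_iff floor_le_iff)
      have pj1: "p j \<le> t" using fl1 T Kpos unfolding p_def by (simp add: field_simps)
      have h1: "t * real K < (real j + 1) * T" using fl2 T by (simp add: divide_less_eq)
      then have h2: "t < (real j + 1) * T / real K" using Kpos by (simp add: less_divide_eq)
      have h3: "(real j + 1) * T / real K = T * (real j / real K) + T / real K"
        using Kpos by (simp add: field_simps)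
      have pj2: "t - p j < T / real K" using h2 h3 unfolding p_def by simp
      have pj0: "p j \<in> {0..T}" using pj1 t unfolding p_def using T Kpos by auto
      have d: "\<bar>t - p j\<bar> \<le> T / real K" using pj1 pj2 by auto
      have "\<bar>G m t - G m (p j)\<bar> \<le> L * \<bar>t - p j\<bar>" unfolding G_def by (rule lip[OF t pj0])
      also have "\<dots> \<le> L * (T / real K)" using d L by (intro mult_left_mono)
      finally have a1: "\<bar>G m t - G m (p j)\<bar> < e / 3" using LK by linarith
      have "\<bar>G n t - G n (p j)\<bar> \<le> L * \<bar>t - p j\<bar>" unfolding G_def by (rule lip[OF t pj0])
      also have "\<dots> \<le> L * (T / real K)" using d L by (intro mult_left_mono)
      finally have a2: "\<bar>G n t - G n (p j)\<bar> < e / 3" using LK by linarith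
      have a3: "\<bar>G m (p j) - l j\<bar> < e / 6" "\<bar>G n (p j) - l j\<bar> < e / 6" using N m n jK by auto
      show "dist (G m t) (G n t) < e" unfolding dist_real_def using a1 a2 a3 by linarith
    qed
  qed
  obtain u where "uniform_limit {0..T} G u sequentially"
    using Cauchy_uniformly_convergent[OF uc] unfolding uniformly_convergent_on_def by blast
  then have *: "\<forall>e>0. \<exists>N. \<forall>n\<ge>N. \<forall>t\<in>{0..T}. \<bar>F (r n) t - u t\<bar> < e"
    unfolding uniform_limit_sequentially_iff G_def dist_real_def by blast
  show ?thesis
    apply (rule exI[where x=r])
    apply (rule exI[where x=u])
    using rmono * by blast
qed



lemma REP_uN:
  fixes T A :: real and a f :: "real \<Rightarrow> real" and N :: nat and h c :: real
  assumes Tpos: "T > 0" and Npos: "N > 0" and hdef: "h = T / real N"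
    and acont: "continuous_on {0..T} a" and abnd: "\<forall>t\<in>{0..T}. 0 \<le> a t \<and> a t \<le> A"
  shows "REP T a f c (sig a (\<lambda>x. f (max x 0)) h N c) (uN a (\<lambda>x. f (max x 0)) h N c)"
  unfolding REP_def
proof (intro conjI ballI)
  show "kint T (\<lambda>s. a s * sig a (\<lambda>x. f (max x 0)) h N c s)"
    by (rule kint_sig[OF Tpos Npos hdef acont abnd])
  fix t assume "t \<in> {0..T}"
  then show "uN a (\<lambda>x. f (max x 0)) h N c t = c - Phi (\<lambda>s. a s * sig a (\<lambda>x. f (max x 0)) h N c s) t"
    using uN_rep[OF Tpos Npos hdef acont abnd] by auto
next
  fix s assume s: "s \<in> {0..T}"
  show "\<exists>q\<in>{0..s}. sig a (\<lambda>x. f (max x 0)) h N c s = f (max (uN a (\<lambda>x. f (max x 0)) h N c q) 0)"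
    using sig_eq(1)[where g="\<lambda>x. f (max x 0)" and c=c and s=s, OF Tpos Npos hdef acont abnd]
      sig_eq(2,3)[where s=s, OF Tpos Npos hdef acont abnd] s by auto
qed

lemma g_cont:
  assumes "continuous_on {0..} f"
  shows "continuous_on UNIV (\<lambda>x. (f::real\<Rightarrow>real) (max x 0))"
  by (rule continuous_on_compose2[OF assms]) (auto intro: continuous_intros)

lemma a_interval:
  fixes a :: "real \<Rightarrow> real"
  assumes Tpos: "T > 0" and acont: "continuous_on {0..T} a" and t0: "t0 \<in> {0..T}" "a t0 > 0"
  shows "\<exists>t1 t2 a0. 0 \<le> t1 \<and> t1 < t2 \<and> t2 < T \<and> a0 > 0 \<and> (\<forall>s\<in>{t1..t2}. a0 \<le> a s)"
proof -
  obtain d where d: "d > 0" "\<forall>s\<in>{0..T}. dist s t0 < d \<longrightarrow> dist (a s) (a t0) < a t0 / 2"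
    using acont t0 unfolding continuous_on_iff by (metis half_gt_zero)
  define e where "e = min (d / 2) (T / 2)"
  define t1 where "t1 = max 0 (t0 - e)"
  define t2 where "t2 = t1 + e / 2"
  have e: "e > 0" "e \<le> d / 2" "e \<le> T / 2" using d Tpos unfolding e_def by auto
  have "\<forall>s\<in>{t1..t2}. a t0 / 2 \<le> a s"
  proof
    fix s assume s: "s \<in> {t1..t2}"
    have sT: "s \<in> {0..T}" using s t0 e unfolding t1_def t2_def by auto
    have "dist s t0 < d" using s t0 e unfolding t1_def t2_def dist_real_def by auto
    then have "dist (a s) (a t0) < a t0 / 2" using d sT by blast
    then have "\<bar>a s - a t0\<bar> < a t0 / 2" by (simp add: dist_real_def)
    then show "a t0 / 2 \<le> a s" by arith
  qed
  moreover have "0 \<le> t1" "t1 < t2" "t2 < T" using e t0 unfolding t1_def t2_def by auto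
  ultimately show ?thesis using t0 by (intro exI[of _ t1] exI[of _ t2] exI[of _ "a t0 / 2"]) auto
qed

lemma f_zero:
  fixes f :: "real \<Rightarrow> real"
  assumes fcont: "continuous_on {0..} f" and fnn: "\<forall>x\<ge>0. f x \<ge> 0"
    and lim: "((\<lambda>u. f u / u) \<longlongrightarrow> 0) (at_right 0)"
  shows "f 0 = 0"
proof (rule ccontr)
  assume "f 0 \<noteq> 0"
  then have f0: "f 0 > 0" using fnn by force
  obtain d where d: "d > 0" "\<forall>x\<in>{0..}. dist x 0 < d \<longrightarrow> dist (f x) (f 0) < f 0 / 2"
    using fcont f0 unfolding continuous_on_iff by (metis atLeast_iff half_gt_zero order_refl)
  have "eventually (\<lambda>u. dist (f u / u) 0 < 1) (at_right 0)" using lim by (rule tendstoD) simp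
  then obtain b where b: "b > 0" "\<And>x. 0 < x \<Longrightarrow> x < b \<Longrightarrow> \<bar>f x / x\<bar> < 1"
    unfolding eventually_at_right_field by auto
  define x where "x = min (min d b) (f 0 / 2) / 2"
  have x: "x > 0" "x < d" "x < b" "x < f 0 / 2" using d b f0 unfolding x_def by auto
  have "\<bar>f x / x\<bar> < 1" using b x by auto
  then have "f x < x" using x by (simp add: abs_less_iff divide_less_eq)
  moreover have "dist (f x) (f 0) < f 0 / 2" using d x by (auto simp: dist_real_def)
  ultimately show False using x by (auto simp: dist_real_def)
qed



context
  fixes T \<eta> \<alpha> A a0 t1 t2 :: real and a f :: "real \<Rightarrow> real"
  assumes Tpos: "T > 0" and eta: "0 < \<eta>" "\<eta> < T" and alpha: "0 < \<alpha>" "\<alpha> * \<eta> < 1"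
    and abnd: "\<forall>t\<in>{0..T}. 0 \<le> a t \<and> a t \<le> A"
    and fcont: "continuous_on {0..} f" and fnn: "\<forall>x\<ge>0. f x \<ge> 0"
    and t12: "0 \<le> t1" "t1 < t2" "t2 < T" and a0: "a0 > 0" "\<forall>s\<in>{t1..t2}. a0 \<le> a s"
begin

lemma low_of:
  assumes c: "c > 0"
    and fM: "\<forall>x\<in>{(1 - t2/T) * c..c}. (2 / ((1 - t2/T) * (a0 * (T - t2) * (t2 - t1)))) * x \<le> f x"
  shows "\<forall>\<sigma> u. REP T a f c \<sigma> u \<longrightarrow> u T - \<alpha> * integral {0..\<eta>} u < 0"
proof (intro allI impI)
  fix \<sigma> u assume rep: "REP T a f c \<sigma> u"
  define \<delta> where "\<delta> = 1 - t2 / T"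
  define P where "P = a0 * (T - t2) * (t2 - t1)"
  have \<delta>: "\<delta> > 0" unfolding \<delta>_def using t12 Tpos by (simp add: field_simps)
  have P: "P > 0" unfolding P_def using t12 a0 by simp
  define M where "M = 2 / (\<delta> * P)"
  have M0: "M \<ge> 0" unfolding M_def using \<delta> P by simp
  have "M * (\<delta> * c) * a0 * (T - t2) * (t2 - t1) = M * \<delta> * P * c" unfolding P_def by (simp add: algebra_simps)
  also have "\<dots> = 2 * c" unfolding M_def using \<delta> P by simp
  finally have big: "M * (\<delta> * c) * a0 * (T - t2) * (t2 - t1) > c" using c by simp
  show "u T - \<alpha> * integral {0..\<eta>} u < 0"
    using R_low[OF Tpos eta alpha abnd fcont fnn rep c t12(1) less_imp_le[OF t12(2)] t12(3)
        less_imp_le[OF a0(1)] a0(2) M0] big fM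
    unfolding \<delta>_def M_def P_def by auto
qed

lemma up_of:
  assumes c: "c > 0" and e: "\<epsilon> \<ge> 0" "C \<ge> 0" and fb: "\<forall>x\<in>{0..c}. f x \<le> \<epsilon> * x + C"
    and big: "c - T * T * (A * (\<epsilon> * c + C)) - \<alpha> * \<eta> * c > 0"
  shows "\<forall>\<sigma> u. REP T a f c \<sigma> u \<longrightarrow> u T - \<alpha> * integral {0..\<eta>} u > 0"
  using R_up[OF Tpos eta alpha abnd fcont fnn _ c e fb big] by blast

lemma ends:
  assumes lim: "(((\<lambda>u. f u / u) \<longlongrightarrow> 0) (at_right 0) \<and> filterlim (\<lambda>u. f u / u) at_top at_top)
       \<or> (filterlim (\<lambda>u. f u / u) at_top (at_right 0) \<and> ((\<lambda>u. f u / u) \<longlongrightarrow> 0) at_top)"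
  shows "\<exists>c1 c2. 0 < c1 \<and> c1 < c2 \<and>
    (((\<forall>\<sigma> u. REP T a f c1 \<sigma> u \<longrightarrow> u T - \<alpha> * integral {0..\<eta>} u > 0) \<and>
      (\<forall>\<sigma> u. REP T a f c2 \<sigma> u \<longrightarrow> u T - \<alpha> * integral {0..\<eta>} u < 0)) \<or>
     ((\<forall>\<sigma> u. REP T a f c1 \<sigma> u \<longrightarrow> u T - \<alpha> * integral {0..\<eta>} u < 0) \<and>
      (\<forall>\<sigma> u. REP T a f c2 \<sigma> u \<longrightarrow> u T - \<alpha> * integral {0..\<eta>} u > 0)))"
proof -
  have A0: "A \<ge> 0" using abnd Tpos by force
  define KK where "KK = T * T * A"
  have KK0: "KK \<ge> 0" unfolding KK_def using A0 by simp
  define \<theta> where "\<theta> = (1 - \<alpha> * \<eta>) / 2"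
  have \<theta>: "\<theta> > 0" unfolding \<theta>_def using alpha by simp
  define \<epsilon> where "\<epsilon> = \<theta> / (KK + 1)"
  have \<epsilon>: "\<epsilon> > 0" unfolding \<epsilon>_def using \<theta> KK0 by simp
  have KKe: "KK * \<epsilon> < \<theta>" unfolding \<epsilon>_def using \<theta> KK0 by (simp add: field_simps)
  have bigf: "c - T * T * (A * (\<epsilon> * c + C)) - \<alpha> * \<eta> * c = c * (1 - \<alpha> * \<eta> - KK * \<epsilon>) - KK * C" for c C
    unfolding KK_def by (simp add: algebra_simps)
  have gap: "1 - \<alpha> * \<eta> - KK * \<epsilon> > \<theta>" using KKe unfolding \<theta>_def by simp
  define \<delta> where "\<delta> = 1 - t2 / T"
  have \<delta>: "\<delta> > 0" unfolding \<delta>_def using t12 Tpos by (simp add: field_simps)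
  define P where "P = a0 * (T - t2) * (t2 - t1)"
  define M where "M = 2 / (\<delta> * P)"
  have lowI: "\<forall>\<sigma> u. REP T a f c \<sigma> u \<longrightarrow> u T - \<alpha> * integral {0..\<eta>} u < 0"
    if "c > 0" "\<forall>x\<in>{\<delta> * c..c}. M * x \<le> f x" for c
    using low_of[OF that(1)] that(2) unfolding M_def P_def \<delta>_def by simp
  from lim show ?thesis
  proof
    assume H: "((\<lambda>u. f u / u) \<longlongrightarrow> 0) (at_right 0) \<and> filterlim (\<lambda>u. f u / u) at_top at_top"
    have f0: "f 0 = 0" using f_zero[OF fcont fnn] H by blast
    have "eventually (\<lambda>u. dist (f u / u) 0 < \<epsilon>) (at_right 0)" using H \<epsilon> by (intro tendstoD) auto
    then obtain b where b: "b > 0" "\<And>x. 0 < x \<Longrightarrow> x < b \<Longrightarrow> \<bar>f x / x\<bar> < \<epsilon>"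
      unfolding eventually_at_right_field by auto
    define c1 where "c1 = b / 2"
    have c1: "c1 > 0" unfolding c1_def using b by simp
    have fb: "\<forall>x\<in>{0..c1}. f x \<le> \<epsilon> * x + 0"
    proof
      fix x assume x: "x \<in> {0..c1}"
      show "f x \<le> \<epsilon> * x + 0"
      proof (cases "x = 0")
        case True then show ?thesis using f0 by simp
      next
        case False
        then have "x > 0" "x < b" using x b unfolding c1_def by auto
        then have "\<bar>f x / x\<bar> < \<epsilon>" using b by auto
        then have "f x / x < \<epsilon>" by (meson abs_ge_self le_less_trans)
        then show ?thesis using \<open>x > 0\<close> by (simp add: divide_less_eq)
      qed
    qed
    have big1: "c1 - T * T * (A * (\<epsilon> * c1 + 0)) - \<alpha> * \<eta> * c1 > 0"
    proof -
      have "c1 * (1 - \<alpha> * \<eta> - KK * \<epsilon>) > 0" using c1 gap \<theta> by simp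
      then show ?thesis using bigf[of c1 0] by simp
    qed
    have e1: "\<forall>\<sigma> u. REP T a f c1 \<sigma> u \<longrightarrow> u T - \<alpha> * integral {0..\<eta>} u > 0"
      using up_of[OF c1 less_imp_le[OF \<epsilon>] order_refl fb big1] .
    have "eventually (\<lambda>x. M \<le> f x / x) at_top" using H by (simp add: filterlim_at_top)
    then obtain X where X: "\<And>x. x \<ge> X \<Longrightarrow> M \<le> f x / x" unfolding eventually_at_top_linorder by auto
    define c2 where "c2 = max (2 * c1) (max X 1 / \<delta>)"
    have c2: "c2 > c1" "c2 > 0" unfolding c2_def using c1 by auto
    have dc2: "\<delta> * c2 \<ge> max X 1"
    proof -
      have "\<delta> * c2 \<ge> \<delta> * (max X 1 / \<delta>)" unfolding c2_def using \<delta> by (intro mult_left_mono) auto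
      then show ?thesis using \<delta> by simp
    qed
    have "\<forall>x\<in>{\<delta> * c2..c2}. M * x \<le> f x"
    proof
      fix x assume x: "x \<in> {\<delta> * c2..c2}"
      then have x1: "x \<ge> X" "x > 0" using dc2 by auto
      then have "M \<le> f x / x" using X by auto
      then show "M * x \<le> f x" using x1 by (simp add: le_divide_eq)
    qed
    then have e2: "\<forall>\<sigma> u. REP T a f c2 \<sigma> u \<longrightarrow> u T - \<alpha> * integral {0..\<eta>} u < 0"
      using lowI c2 by blast
    show ?thesis using c1 c2 e1 e2 by blast
  next
    assume H: "filterlim (\<lambda>u. f u / u) at_top (at_right 0) \<and> ((\<lambda>u. f u / u) \<longlongrightarrow> 0) at_top"
    have "eventually (\<lambda>x. M \<le> f x / x) (at_right 0)" using H by (simp add: filterlim_at_top)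
    then obtain b where b: "b > 0" "\<And>x. 0 < x \<Longrightarrow> x < b \<Longrightarrow> M \<le> f x / x"
      unfolding eventually_at_right_field by auto
    define c1 where "c1 = b / 2"
    have c1: "c1 > 0" unfolding c1_def using b by simp
    have "\<delta> \<le> 1" unfolding \<delta>_def using t12 Tpos by simp
    have "\<forall>x\<in>{\<delta> * c1..c1}. M * x \<le> f x"
    proof
      fix x assume x: "x \<in> {\<delta> * c1..c1}"
      have "\<delta> * c1 > 0" using \<delta> c1 by simp
      then have x1: "x > 0" "x < b" using x c1 b unfolding c1_def by auto
      then have "M \<le> f x / x" using b by auto
      then show "M * x \<le> f x" using x1 by (simp add: le_divide_eq)
    qed
    then have e1: "\<forall>\<sigma> u. REP T a f c1 \<sigma> u \<longrightarrow> u T - \<alpha> * integral {0..\<eta>} u < 0"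
      using lowI c1 by blast
    have "eventually (\<lambda>u. dist (f u / u) 0 < \<epsilon>) at_top" using H \<epsilon> by (intro tendstoD) auto
    then obtain X where X: "\<And>x. x \<ge> X \<Longrightarrow> \<bar>f x / x\<bar> < \<epsilon>" unfolding eventually_at_top_linorder by auto
    define X' where "X' = max X 1"
    obtain C where C: "C \<ge> 0" "\<forall>x\<in>{0..X'}. f x \<le> C" using f_bound[OF fcont] by blast
    define c2 where "c2 = max (2 * c1) ((KK * C + 1) / \<theta>)"
    have c2: "c2 > c1" "c2 > 0" unfolding c2_def using c1 by auto
    have fb: "\<forall>x\<in>{0..c2}. f x \<le> \<epsilon> * x + C"
    proof
      fix x assume x: "x \<in> {0..c2}"
      show "f x \<le> \<epsilon> * x + C"
      proof (cases "x \<le> X'")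
        case True
        then have "f x \<le> C" using C x by auto
        then show ?thesis using \<epsilon> x by (simp add: add_increasing)
      next
        case False
        then have "x \<ge> X" "x > 0" unfolding X'_def by auto
        then have "\<bar>f x / x\<bar> < \<epsilon>" using X by blast
        then have "f x / x < \<epsilon>" by (meson abs_ge_self le_less_trans)
        then have "f x < \<epsilon> * x" using \<open>x > 0\<close> by (simp add: divide_less_eq)
        then show ?thesis using C by simp
      qed
    qed
    have big2: "c2 - T * T * (A * (\<epsilon> * c2 + C)) - \<alpha> * \<eta> * c2 > 0"
    proof -
      have "c2 * \<theta> \<ge> ((KK * C + 1) / \<theta>) * \<theta>" unfolding c2_def using \<theta> by (intro mult_right_mono) auto
      then have "c2 * \<theta> \<ge> KK * C + 1" using \<theta> by simp
      moreover have "c2 * (1 - \<alpha> * \<eta> - KK * \<epsilon>) \<ge> c2 * \<theta>" using gap c2 by (intro mult_left_mono) auto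
      ultimately show ?thesis using bigf[of c2 C] by simp
    qed
    have e2: "\<forall>\<sigma> u. REP T a f c2 \<sigma> u \<longrightarrow> u T - \<alpha> * integral {0..\<eta>} u > 0"
      using up_of[OF c2(2) less_imp_le[OF \<epsilon>] C(1) fb big2] .
    show ?thesis using c1 c2 e1 e2 by blast
  qed
qed

end



lemma lip_cont:
  assumes "L \<ge> 0" "\<And>t t'. t \<in> S \<Longrightarrow> t' \<in> S \<Longrightarrow> \<bar>u t - u t'\<bar> \<le> L * \<bar>t - t'\<bar>"
  shows "continuous_on S (u :: real \<Rightarrow> real)"
proof (rule lipschitz_on_continuous_on)
  show "L-lipschitz_on S u" using assms by (intro lipschitz_onI) (auto simp: dist_real_def)
qed

lemma abs_le_eps:
  fixes x :: real
  assumes "\<And>e. e > 0 \<Longrightarrow> \<bar>x\<bar> < e"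
  shows "x = 0"
  using assms[of "\<bar>x\<bar>"] by (cases "x = 0") auto

context
  fixes T \<eta> \<alpha> A a0 t1 t2 :: real and a f :: "real \<Rightarrow> real"
  assumes Tpos: "T > 0" and eta: "0 < \<eta>" "\<eta> < T" and alpha: "0 < \<alpha>" "\<alpha> * \<eta> < 1"
    and abnd: "\<forall>t\<in>{0..T}. 0 \<le> a t \<and> a t \<le> A" and acont: "continuous_on {0..T} a"
    and fcont: "continuous_on {0..} f" and fnn: "\<forall>x\<ge>0. f x \<ge> 0"
begin

abbreviation "g \<equiv> (\<lambda>x. f (max x 0))"
abbreviation "hN n \<equiv> T / real (Suc n)"
abbreviation "FF n c \<equiv> uN a g (hN n) (Suc n) c"
abbreviation "SS n c \<equiv> sig a g (hN n) (Suc n) c"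

lemma REP_FF: "REP T a f c (SS n c) (FF n c)"
  by (rule REP_uN[OF Tpos _ refl acont abnd]) simp

lemma approx:
  assumes c12: "c1 \<le> c2"
    and ep: "((\<forall>\<sigma> u. REP T a f c1 \<sigma> u \<longrightarrow> u T - \<alpha> * integral {0..\<eta>} u > 0) \<and>
      (\<forall>\<sigma> u. REP T a f c2 \<sigma> u \<longrightarrow> u T - \<alpha> * integral {0..\<eta>} u < 0)) \<or>
     ((\<forall>\<sigma> u. REP T a f c1 \<sigma> u \<longrightarrow> u T - \<alpha> * integral {0..\<eta>} u < 0) \<and>
      (\<forall>\<sigma> u. REP T a f c2 \<sigma> u \<longrightarrow> u T - \<alpha> * integral {0..\<eta>} u > 0))"
  shows "\<exists>c. c1 \<le> c \<and> c \<le> c2 \<and> FF n c T - \<alpha> * integral {0..\<eta>} (FF n c) = 0"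
proof -
  define B where "B c = FF n c T - \<alpha> * integral {0..\<eta>} (FF n c)" for c
  have "continuous_on UNIV B" unfolding B_def
    by (rule B_cont[OF Tpos _ refl acont abnd g_cont[OF fcont]]) (use eta in auto)
  then have cB: "continuous_on {c1..c2} B" by (rule continuous_on_subset) auto
  from ep show ?thesis
  proof
    assume H: "(\<forall>\<sigma> u. REP T a f c1 \<sigma> u \<longrightarrow> u T - \<alpha> * integral {0..\<eta>} u > 0) \<and>
      (\<forall>\<sigma> u. REP T a f c2 \<sigma> u \<longrightarrow> u T - \<alpha> * integral {0..\<eta>} u < 0)"
    have "B c1 > 0" "B c2 < 0" unfolding B_def using H REP_FF by blast+
    then show ?thesis using IVT2'[of B c2 0 c1, OF _ _ c12 cB] unfolding B_def by auto
  next
    assume H: "(\<forall>\<sigma> u. REP T a f c1 \<sigma> u \<longrightarrow> u T - \<alpha> * integral {0..\<eta>} u < 0) \<and>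
      (\<forall>\<sigma> u. REP T a f c2 \<sigma> u \<longrightarrow> u T - \<alpha> * integral {0..\<eta>} u > 0)"
    have "B c1 < 0" "B c2 > 0" unfolding B_def using H REP_FF by blast+
    then show ?thesis using IVT'[of B c1 0 c2, OF _ _ c12 cB] unfolding B_def by auto
  qed
qed


lemma limit_sol:
  assumes c1: "0 < c1" "c1 \<le> c2"
    and ep: "((\<forall>\<sigma> u. REP T a f c1 \<sigma> u \<longrightarrow> u T - \<alpha> * integral {0..\<eta>} u > 0) \<and>
      (\<forall>\<sigma> u. REP T a f c2 \<sigma> u \<longrightarrow> u T - \<alpha> * integral {0..\<eta>} u < 0)) \<or>
     ((\<forall>\<sigma> u. REP T a f c1 \<sigma> u \<longrightarrow> u T - \<alpha> * integral {0..\<eta>} u < 0) \<and>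
      (\<forall>\<sigma> u. REP T a f c2 \<sigma> u \<longrightarrow> u T - \<alpha> * integral {0..\<eta>} u > 0))"
  shows "\<exists>c u. c > 0 \<and> continuous_on {0..T} u \<and>
    (\<forall>t\<in>{0..T}. u t = c - Phi (\<lambda>s. a s * f (max (u s) 0)) t) \<and> u T - \<alpha> * integral {0..\<eta>} u = 0"
proof -
  obtain cs where cs: "\<And>n. c1 \<le> cs n \<and> cs n \<le> c2 \<and> FF n (cs n) T - \<alpha> * integral {0..\<eta>} (FF n (cs n)) = 0"
    using approx[OF c1(2) ep] by metis
  define F where "F n = FF n (cs n)" for n
  define S where "S n = SS n (cs n)" for n
  have rep: "REP T a f (cs n) (S n) (F n)" for n unfolding F_def S_def by (rule REP_FF)
  note R = R_kint[OF Tpos eta alpha abnd fcont fnn rep] R_u[OF Tpos eta alpha abnd fcont fnn rep]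
    R_sig[OF Tpos eta alpha abnd fcont fnn rep] R_le_c[OF Tpos eta alpha abnd fcont fnn rep]
    R_cont[OF Tpos eta alpha abnd fcont fnn rep]
  obtain Mf where Mf: "Mf \<ge> 0" "\<forall>x\<in>{0..c2}. f x \<le> Mf" using f_bound[OF fcont] by blast
  have A0: "A \<ge> 0" using abnd Tpos by force
  have Sb: "0 \<le> S n s \<and> S n s \<le> Mf" if s: "s \<in> {0..T}" for n s
  proof -
    obtain q where q: "q \<in> {0..s}" "S n s = f (max (F n q) 0)" using R(3)[of s n] s by blast
    have "F n q \<le> cs n" using R(4)[of q n] q s by auto
    then have "max (F n q) 0 \<in> {0..c2}" using cs[of n] c1 by auto
    then show ?thesis using q Mf fnn by auto
  qed
  define K where "K = A * Mf"
  have K0: "K \<ge> 0" unfolding K_def using A0 Mf by simp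
  have kb: "\<forall>s\<in>{0..T}. 0 \<le> a s * S n s \<and> a s * S n s \<le> K" for n
  proof
    fix s assume s: "s \<in> {0..T}"
    have as: "0 \<le> a s" "a s \<le> A" using abnd s by auto
    show "0 \<le> a s * S n s \<and> a s * S n s \<le> K"
      using Sb[OF s, of n] as A0 unfolding K_def by (auto intro: mult_mono)
  qed
  define L where "L = 2 * T * K"
  have L0: "L \<ge> 0" unfolding L_def using Tpos K0 by simp
  define R0 where "R0 = c2 + T * T * K"
  have Fb: "\<bar>F n t\<bar> \<le> R0" if t: "t \<in> {0..T}" for n t
  proof -
    have "0 \<le> Phi (\<lambda>s. a s * S n s) t" using Phi_nonneg[OF R(1)] kb t by auto
    moreover have "Phi (\<lambda>s. a s * S n s) t \<le> T * T * K" using Phi_upper[OF R(1)] kb t K0 by auto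
    ultimately show ?thesis using R(2)[OF t, of n] cs[of n] c1 unfolding R0_def by auto
  qed
  have Fl: "\<bar>F n t - F n t'\<bar> \<le> L * \<bar>t - t'\<bar>" if t: "t \<in> {0..T}" "t' \<in> {0..T}" for n t t'
  proof (cases "t \<le> t'")
    case True
    then show ?thesis using Phi_lip[OF R(1) kb, of t t'] R(2)[of t n] R(2)[of t' n] t unfolding L_def by auto
  next
    case False
    then show ?thesis using Phi_lip[OF R(1) kb, of t' t] R(2)[of t n] R(2)[of t' n] t unfolding L_def by auto
  qed
  obtain r u where r: "strict_mono (r :: nat \<Rightarrow> nat)"
    and uc: "\<forall>e>0. \<exists>N. \<forall>n\<ge>N. \<forall>t\<in>{0..T}. \<bar>F (r n) t - u t\<bar> < e"
    using AA[where F=F and R=R0 and L=L, OF Tpos L0 Fb Fl] by blast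
  have ucD: "\<exists>N. \<forall>n\<ge>N. \<forall>t\<in>{0..T}. \<bar>F (r n) t - u t\<bar> < e" if "e > 0" for e using uc that by blast
  have ub: "\<bar>u t\<bar> \<le> R0" if t: "t \<in> {0..T}" for t
  proof (rule field_le_epsilon)
    fix e :: real assume e: "e > 0"
    obtain N where "\<forall>n\<ge>N. \<forall>t\<in>{0..T}. \<bar>F (r n) t - u t\<bar> < e" using ucD[OF e] by blast
    then have "\<bar>F (r N) t - u t\<bar> < e" using t by auto
    then show "\<bar>u t\<bar> \<le> R0 + e" using Fb[OF t, of "r N"] by linarith
  qed
  have ul: "\<bar>u t - u t'\<bar> \<le> L * \<bar>t - t'\<bar>" if t: "t \<in> {0..T}" "t' \<in> {0..T}" for t t'
  proof (rule field_le_epsilon)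
    fix e :: real assume e: "e > 0"
    obtain N where "\<forall>n\<ge>N. \<forall>t\<in>{0..T}. \<bar>F (r n) t - u t\<bar> < e / 2" using ucD[of "e/2"] e by auto
    then have "\<bar>F (r N) t - u t\<bar> < e / 2" "\<bar>F (r N) t' - u t'\<bar> < e / 2" using t by auto
    then show "\<bar>u t - u t'\<bar> \<le> L * \<bar>t - t'\<bar> + e" using Fl[OF t, of "r N"] by linarith
  qed
  have ucont: "continuous_on {0..T} u" by (rule lip_cont[OF L0 ul])
  define c where "c = u 0"
  have F0: "F n 0 = cs n" for n using R(2)[of 0 n] Tpos by (simp add: Phi_0)
  have cge: "c1 \<le> c"
  proof (rule field_le_epsilon)
    fix e :: real assume e: "e > 0"
    obtain N where "\<forall>n\<ge>N. \<forall>t\<in>{0..T}. \<bar>F (r n) t - u t\<bar> < e" using ucD[OF e] by blast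
    then have "\<bar>F (r N) 0 - u 0\<bar> < e" using Tpos by auto
    then show "c1 \<le> c + e" using F0[of "r N"] cs[of "r N"] unfolding c_def by linarith
  qed
  define k where "k s = a s * f (max (u s) 0)" for s
  have kcont: "continuous_on {0..T} k" unfolding k_def
    by (intro continuous_intros acont continuous_on_compose2[OF g_cont[OF fcont] ucont]) auto
  have kint: "kint T k" unfolding kint_def
    by (intro conjI integrable_continuous_real continuous_intros kcont)
  have gU: "uniformly_continuous_on {-R0..R0} g"
    by (rule compact_uniformly_continuous[OF continuous_on_subset[OF g_cont[OF fcont]]]) auto
  have main: "u t = c - Phi k t" if t: "t \<in> {0..T}" for t
  proof -
    have "\<bar>u t - (c - Phi k t)\<bar> < e" if e: "e > 0" for e
    proof -
      define E where "E = T * T * A + 1"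
      have E: "E > 0" unfolding E_def using A0 by (simp add: add_nonneg_pos)
      define e' where "e' = e / (2 * E)"
      have e': "e' > 0" unfolding e'_def using e E by simp
      obtain d where d: "d > 0" "\<forall>x\<in>{-R0..R0}. \<forall>x'\<in>{-R0..R0}. dist x' x < d \<longrightarrow> dist (g x') (g x) < e'"
        using gU e' unfolding uniformly_continuous_on_def by metis
      obtain N1 where N1: "\<forall>n\<ge>N1. \<forall>t\<in>{0..T}. \<bar>F (r n) t - u t\<bar> < min (d / 2) (e / 4)"
        using ucD[of "min (d / 2) (e / 4)"] d e by auto
      obtain N2 :: nat where N2: "2 * L * T / d < real N2" using reals_Archimedean2 by blast
      define m where "m = r (max N1 N2)"
      have mN: "max N1 N2 \<le> m" unfolding m_def using seq_suble[OF r] by blast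
      have close: "\<bar>F m t - u t\<bar> < min (d / 2) (e / 4)" if "t \<in> {0..T}" for t
        using N1 that unfolding m_def by auto
      define h where "h = hN m"
      have hpos: "h > 0" unfolding h_def using Tpos by simp
      have Lh: "L * h < d / 2"
      proof -
        have "2 * L * T < real N2 * d" using N2 d by (simp add: divide_less_eq)
        also have "\<dots> \<le> real (Suc m) * d" using mN d by (intro mult_right_mono) auto
        finally have "L * T < real (Suc m) * (d / 2)" by simp
        then show ?thesis unfolding h_def by (simp add: divide_less_eq mult.commute)
      qed
      have kd: "\<bar>a s * S m s - k s\<bar> \<le> A * e'" if s: "s \<in> {0..T}" for s
      proof -
        define p where "p = real (nat \<lfloor>s / h\<rfloor>) * h"
        have Seq: "S m s = g (F m p)" unfolding S_def F_def p_def h_def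
          using sig_eq(1)[where g=g and c="cs m" and s=s and N="Suc m", OF Tpos _ refl acont abnd] s by simp
        have p: "0 \<le> p" "p \<le> s" unfolding p_def h_def
          using sig_eq(2,3)[where s=s and N="Suc m", OF Tpos _ refl acont abnd] s by auto
        have "s / h < real_of_int \<lfloor>s / h\<rfloor> + 1" by linarith
        moreover have "real (nat \<lfloor>s / h\<rfloor>) = real_of_int \<lfloor>s / h\<rfloor>" using s hpos by simp
        ultimately have "s / h < real (nat \<lfloor>s / h\<rfloor>) + 1" by simp
        then have "s < (real (nat \<lfloor>s / h\<rfloor>) + 1) * h" using hpos by (simp add: divide_less_eq)
        then have sp: "s - p < h" unfolding p_def by (simp add: algebra_simps)
        have pT: "p \<in> {0..T}" using p s by auto
        have "\<bar>F m p - F m s\<bar> \<le> L * \<bar>p - s\<bar>" by (rule Fl[OF pT s])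
        also have "\<dots> \<le> L * h" using sp p L0 by (intro mult_left_mono) auto
        finally have "\<bar>F m p - u s\<bar> < d" using close[OF s] Lh by linarith
        moreover have "F m p \<in> {-R0..R0}" "u s \<in> {-R0..R0}" using Fb[OF pT, of m] ub[OF s] by (auto simp: abs_le_iff)
        ultimately have "\<bar>g (F m p) - g (u s)\<bar> < e'" using d(2) by (auto simp: dist_real_def)
        then have "\<bar>a s * S m s - k s\<bar> = a s * \<bar>g (F m p) - g (u s)\<bar>"
          unfolding k_def Seq using abnd s by (simp add: abs_mult flip: right_diff_distrib)
        also have "\<dots> \<le> A * e'" using abnd s \<open>\<bar>g (F m p) - g (u s)\<bar> < e'\<close> e'
          by (intro mult_mono) auto
        finally show ?thesis .
      qed
      have kd': "\<forall>s\<in>{0..T}. \<bar>a s * S m s - k s\<bar> \<le> A * e'" using kd by blast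
      have "\<bar>Phi (\<lambda>s. a s * S m s) t - Phi k t\<bar> \<le> T * T * (A * e')"
        using Phi_close[OF R(1)[of m] kint kd'] t by auto
      also have "\<dots> < e / 2"
      proof -
        have "T * T * (A * e') = (T * T * A) * e'" by simp
        also have "\<dots> < E * e'" unfolding E_def using e' by simp
        also have "\<dots> = e / 2" unfolding e'_def using E by simp
        finally show ?thesis .
      qed
      finally have P1: "\<bar>Phi (\<lambda>s. a s * S m s) t - Phi k t\<bar> < e / 2" .
      have P2: "\<bar>F m t - u t\<bar> < e / 4" using close[OF t] by simp
      have P3: "\<bar>F m 0 - u 0\<bar> < e / 4" using close[of 0] Tpos by simp
      have P4: "F m t = cs m - Phi (\<lambda>s. a s * S m s) t" using R(2)[OF t] .
      show ?thesis using P1 P2 P3 P4 F0[of m] unfolding c_def by linarith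
    qed
    then show ?thesis using abs_le_eps[of "u t - (c - Phi k t)"] by simp
  qed
  have Bz: "u T - \<alpha> * integral {0..\<eta>} u = 0"
  proof (rule abs_le_eps)
    fix e :: real assume e: "e > 0"
    define e' where "e' = (e / 2) / (1 + \<alpha> * \<eta>)"
    have e': "e' > 0" unfolding e'_def using e alpha eta by (simp add: add_pos_pos)
    obtain N where N: "\<forall>n\<ge>N. \<forall>t\<in>{0..T}. \<bar>F (r n) t - u t\<bar> < e'" using ucD[OF e'] by blast
    define m where "m = r N"
    have cl: "\<bar>F m t - u t\<bar> < e'" if "t \<in> {0..T}" for t using N that unfolding m_def by auto
    have Fz: "F m T - \<alpha> * integral {0..\<eta>} (F m) = 0" using cs[of m] unfolding F_def by simp
    have iF: "F m integrable_on {0..\<eta>}" "u integrable_on {0..\<eta>}"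
      using R(5)[of m] ucont eta by (auto intro!: integrable_continuous_real elim: continuous_on_subset)
    have "norm (integral {0..\<eta>} (\<lambda>t. F m t - u t)) \<le> integral {0..\<eta>} (\<lambda>t. e')"
    proof (rule integral_norm_bound_integral)
      show "(\<lambda>t. F m t - u t) integrable_on {0..\<eta>}" using iF by (rule integrable_diff)
      show "(\<lambda>t. e') integrable_on {0..\<eta>}" by (intro integrable_continuous_real continuous_intros)
      fix t assume "t \<in> {0..\<eta>}"
      then show "norm (F m t - u t) \<le> e'" using cl[of t] eta by auto
    qed
    then have "\<bar>integral {0..\<eta>} (F m) - integral {0..\<eta>} u\<bar> \<le> \<eta> * e'"
      using iF eta by (simp add: integral_diff)
    then have "\<alpha> * \<bar>integral {0..\<eta>} (F m) - integral {0..\<eta>} u\<bar> \<le> \<alpha> * (\<eta> * e')"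
      using alpha by (intro mult_left_mono) auto
    then have I: "\<bar>\<alpha> * integral {0..\<eta>} (F m) - \<alpha> * integral {0..\<eta>} u\<bar> \<le> \<alpha> * \<eta> * e'"
      using alpha by (simp add: abs_mult flip: right_diff_distrib)
    have T1: "\<bar>F m T - u T\<bar> < e'" using cl[of T] Tpos by auto
    have "\<bar>u T - \<alpha> * integral {0..\<eta>} u\<bar> < e' + \<alpha> * \<eta> * e'" using I T1 Fz by linarith
    also have "\<dots> = e' * (1 + \<alpha> * \<eta>)" by (simp add: algebra_simps)
    also have "\<dots> = e / 2"
    proof -
      have pos: "1 + \<alpha> * \<eta> > 0" using alpha eta by (simp add: add_pos_pos)
      then have "1 + \<alpha> * \<eta> \<noteq> 0" by linarith
      then show ?thesis unfolding e'_def by (simp add: field_simps)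
    qed
    finally show "\<bar>u T - \<alpha> * integral {0..\<eta>} u\<bar> < e" using e by linarith
  qed
  show ?thesis
    using cge c1 ucont main Bz unfolding k_def by (intro exI[of _ c] exI[of _ u]) auto
qed

end



lemma regularity:
  fixes k u :: "real \<Rightarrow> real"
  assumes Tpos: "T > 0" and kcont: "continuous_on {0..T} k"
    and ueq: "\<forall>t\<in>{0..T}. u t = c - Phi k t"
  shows "C2_on T u (\<lambda>t. - integral {0..t} k) (\<lambda>t. - k t)"
proof -
  have kint: "kint T k" unfolding kint_def
    by (intro conjI integrable_continuous_real continuous_intros kcont)
  have skcont: "continuous_on {0..T} (\<lambda>s. s * k s)" by (intro continuous_intros kcont)
  have I': "((\<lambda>t. integral {0..t} k) has_real_derivative k t) (at t within {0..T})" if "t \<in> {0..T}" for t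
    using integral_has_vector_derivative[OF kcont that]
    by (simp add: has_real_derivative_iff_has_vector_derivative)
  have J': "((\<lambda>t. integral {0..t} (\<lambda>s. s * k s)) has_real_derivative t * k t) (at t within {0..T})"
    if "t \<in> {0..T}" for t
    using integral_has_vector_derivative[OF skcont that]
    by (simp add: has_real_derivative_iff_has_vector_derivative)
  define E where "E t = c - t * integral {0..t} k + integral {0..t} (\<lambda>s. s * k s)" for t
  have uE: "u t = E t" if "t \<in> {0..T}" for t
    using ueq Phi_alt[OF kint, of t] that unfolding E_def by auto
  have d1: "(u has_real_derivative - integral {0..t} k) (at t within {0..T})" if t: "t \<in> {0..T}" for t
  proof -
    have m: "((\<lambda>z. z * integral {0..z} k) has_real_derivative (t * k t + 1 * integral {0..t} k)) (at t within {0..T})"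
      by (rule DERIV_mult'[OF DERIV_ident I'[OF t]])
    have "(E has_real_derivative (0 - (t * k t + 1 * integral {0..t} k) + t * k t)) (at t within {0..T})"
      unfolding E_def
      by (rule DERIV_add[OF DERIV_diff[OF DERIV_const m] J'[OF t]])
    then have "(E has_real_derivative - integral {0..t} k) (at t within {0..T})" by simp
    then show ?thesis unfolding has_field_derivative_def
      by (rule has_derivative_transform[OF t, rotated]) (use uE in auto)
  qed
  have d2: "((\<lambda>t. - integral {0..t} k) has_real_derivative - k t) (at t within {0..T})" if t: "t \<in> {0..T}" for t
    by (intro derivative_intros I'[OF t])
  show ?thesis unfolding C2_on_def
    using d1 d2 by (auto intro: continuous_intros kcont)
qed



theorem theorem3p1:
  fixes T \<eta> \<alpha> :: real and a f :: "real \<Rightarrow> real"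
  assumes "T > 0" and "0 < \<eta>" and "\<eta> < T" and "0 < \<alpha>" and "\<alpha> < 1 / \<eta>"
    and "continuous_on {0..} f" and "\<forall>u\<ge>0. f u \<ge> 0"
    and "continuous_on {0..T} a" and "\<forall>t\<in>{0..T}. a t \<ge> 0"
    and "\<exists>t0\<in>{0..T}. a t0 > 0"
    and "(((\<lambda>u. f u / u) \<longlongrightarrow> 0) (at_right 0) \<and> filterlim (\<lambda>u. f u / u) at_top at_top)
       \<or> (filterlim (\<lambda>u. f u / u) at_top (at_right 0) \<and> ((\<lambda>u. f u / u) \<longlongrightarrow> 0) at_top)"
  shows "\<exists>u. positive_solution T \<eta> \<alpha> a f u"
proof -
  note Tpos = assms(1) and eta = assms(2,3) and fcont = assms(6) and fnn = assms(7)
    and acont = assms(8) and lim = assms(11)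
  have alpha: "0 < \<alpha>" "\<alpha> * \<eta> < 1" using assms(4,5) eta by (auto simp: less_divide_eq mult.commute)
  have "compact (a ` {0..T})" by (rule compact_continuous_image[OF acont]) simp
  then obtain B where "\<forall>y\<in>a ` {0..T}. norm y \<le> B" using compact_imp_bounded bounded_iff by metis
  then have abnd: "\<forall>t\<in>{0..T}. 0 \<le> a t \<and> a t \<le> B" using assms(9) by force
  obtain t0 where t0: "t0 \<in> {0..T}" "a t0 > 0" using assms(10) by blast
  obtain t1 t2 a0 where t12: "0 \<le> t1" "t1 < t2" "t2 < T" and a0: "a0 > 0" "\<forall>s\<in>{t1..t2}. a0 \<le> a s"
    using a_interval[OF Tpos acont t0] by blast
  obtain c1 c2 where c12: "0 < c1" "c1 < c2" and ep:
    "((\<forall>\<sigma> u. REP T a f c1 \<sigma> u \<longrightarrow> u T - \<alpha> * integral {0..\<eta>} u > 0) \<and>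
      (\<forall>\<sigma> u. REP T a f c2 \<sigma> u \<longrightarrow> u T - \<alpha> * integral {0..\<eta>} u < 0)) \<or>
     ((\<forall>\<sigma> u. REP T a f c1 \<sigma> u \<longrightarrow> u T - \<alpha> * integral {0..\<eta>} u < 0) \<and>
      (\<forall>\<sigma> u. REP T a f c2 \<sigma> u \<longrightarrow> u T - \<alpha> * integral {0..\<eta>} u > 0))"
    using ends[OF Tpos eta alpha abnd fcont fnn t12 a0 lim] by blast
  obtain c u where c: "c > 0" and ucont: "continuous_on {0..T} u"
    and ueq: "\<forall>t\<in>{0..T}. u t = c - Phi (\<lambda>s. a s * f (max (u s) 0)) t"
    and Bz: "u T - \<alpha> * integral {0..\<eta>} u = 0"
    using limit_sol[OF Tpos eta alpha abnd acont fcont fnn c12(1) less_imp_le[OF c12(2)] ep] by blast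
  define k where "k s = a s * f (max (u s) 0)" for s
  have kcont: "continuous_on {0..T} k" unfolding k_def
    by (intro continuous_intros acont continuous_on_compose2[OF g_cont[OF fcont] ucont]) auto
  have kint: "kint T k" unfolding kint_def
    by (intro conjI integrable_continuous_real continuous_intros kcont)
  have rep: "REP T a f c (\<lambda>s. f (max (u s) 0)) u"
    unfolding REP_def using kint ueq unfolding k_def by auto
  have uT: "u T > 0" using R_pos[OF Tpos eta alpha abnd fcont fnn rep c] Bz by simp
  have unn: "u t \<ge> 0" if t: "t \<in> {0..T}" for t
  proof -
    have "c - t * ((c - u T) / T) \<le> u t" by (rule R_lin[OF Tpos eta alpha abnd fcont fnn rep t])
    moreover have "u T \<le> c" using R_le_c[OF Tpos eta alpha abnd fcont fnn rep, of T] Tpos by auto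
    moreover have "t * ((c - u T) / T) \<le> T * ((c - u T) / T)"
      using t calculation(2) Tpos by (intro mult_right_mono) auto
    ultimately show ?thesis using uT Tpos by simp
  qed
  have C2: "C2_on T u (\<lambda>t. - integral {0..t} k) (\<lambda>t. - k t)"
  proof (rule regularity[where c=c, OF Tpos kcont])
    have keq: "(\<lambda>s. a s * f (max (u s) 0)) = k" by (simp add: k_def fun_eq_iff)
    show "\<forall>t\<in>{0..T}. u t = c - Phi k t" using ueq unfolding keq .
  qed
  have u0: "u 0 = c" using ueq Tpos by (auto simp: Phi_0)
  have "positive_solution T \<eta> \<alpha> a f u"
    unfolding positive_solution_def
  proof (intro exI conjI)
    show "C2_on T u (\<lambda>t. - integral {0..t} k) (\<lambda>t. - k t)" by (rule C2)
    show "\<forall>t\<in>{0<..<T}. - k t + a t * f (u t) = 0"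
      using unn unfolding k_def by (auto simp: max_absorb1)
    show "- integral {0..0} k = 0" by simp
    show "u T = \<alpha> * integral {0..\<eta>} u" using Bz by simp
    show "\<forall>t\<in>{0..T}. 0 \<le> u t" using unn by blast
    show "\<exists>t\<in>{0..T}. u t \<noteq> 0" using u0 c Tpos by (intro bexI[of _ 0]) auto
  qed
  then show ?thesis by blast
qed

end
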